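(* Let $R_0>0$, $T>0$, $D=[0,R_0]$, and let $L^2(D)$ denote the weighted space $L^2([0,R_0];r^2)$ with norm $\|\phi\|=\left(\int_0^{R_0} r^2|\phi(r)|^2\,dr\right)^{1/2}$. Let $\lambda_n=(n\pi/R_0)^2$ and $\omega_n(r)=\frac{\sqrt2\, n\pi}{\sqrt{R_0^3}}\frac{\sin(n\pi r/R_0)}{n\pi r/R_0}$, $n\ge1$, which form a complete orthonormal system of $L^2([0,R_0];r^2)$. Let $a:[0,T]\to\mathbb{R}$ satisfy $0<a_0\le a(t)\le a_1$ for constants $a_0,a_1$. Let $B^H$ be a fractional Brownian motion with Hurst index $H\in(0,1)$ on a complete probability space. Assume $f,g\in L^2(D)$ with $\|g\|_{L^2(D)}\neq0$, and $h\in L^\infty(0,T)$ with $h\ge C(h)>0$ a.e. on $(0,T)$ for some constant $C(h)$. Let $f_n=\int_0^{R_0}r^2f(r)\omega_n(r)\,dr$, $g_n=\int_0^{R_0}r^2g(r)\omega_n(r)\,dr$, and let $u$ be the mild solution $$u(r,t)=\sum_{n=1}^\infty\Big[f_n\int_0^t h(\tau)e^{-\lambda_n\int_\tau^t a(s)ds}\,d\tau+g_n\int_0^t e^{-\lambda_n\int_\tau^t a(s)ds}\,dB^H(\tau)\Big]\omega_n(r).$$ Then there is a constant $C>0$, not depending on $f,g,h$, such that $$\mathbb{E}\Big[\|u\|^2_{L^2(D\times[0,T])}\Big]\le C\Big(T^3\|f\|^2_{L^2(D)}\|h\|^2_{L^\infty(0,T)}+\frac{T^{2H+1}}{2H+1}\|g\|^2_{L^2(D)}\Big),$$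 where $\|u\|^2_{L^2(D\times[0,T])}=\int_0^T\|u(\cdot,t)\|^2_{L^2(D)}\,dt$.
   Context: The mild solution is that of the problem $u_t=a(t)[u_{rr}+\frac{2}{r}u_r]+f(r)h(t)+g(r)\dot B^H(t)$ on $0<r<R_0$, $0<t<T$, with $u(r,0)=0$, $u(R_0,t)=0$, $u$ bounded as $r\to0$. A fractional Brownian motion $B^H$ is a centered Gaussian process with $B^H(0)=0$ and covariance $\mathbb{E}[B^H(t)B^H(s)]=\frac12(t^{2H}+s^{2H}-|t-s|^{2H})$; the integrals $\int_0^t\psi(\tau)\,dB^H(\tau)$ of deterministic integrands are Wiener integrals with respect to $B^H$. *)

theory Defs
  imports "HOL-Probability.Probability"
begin

text \<open>Eigenvalues and normalised eigenfunctions of the radial Laplacian on the ball of radius R0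
  (Dirichlet at r = R0); the value at r = 0 is the continuous extension.\<close>
definition lam :: "real \<Rightarrow> nat \<Rightarrow> real" where
  "lam R0 n = (real n * pi / R0)\<^sup>2"

definition omega :: "real \<Rightarrow> nat \<Rightarrow> real \<Rightarrow> real" where
  "omega R0 n r = sqrt 2 * real n * pi / sqrt (R0 ^ 3) *
     (if r = 0 then 1 else sin (real n * pi * r / R0) / (real n * pi * r / R0))"

definition wnorm2 :: "real \<Rightarrow> (real \<Rightarrow> real) \<Rightarrow> real" where
  "wnorm2 R0 \<phi> = (LBINT r:{0..R0}. r\<^sup>2 * (\<phi> r)\<^sup>2)"

definition coeff :: "real \<Rightarrow> (real \<Rightarrow> real) \<Rightarrow> nat \<Rightarrow> real" where
  "coeff R0 \<phi> n = (LBINT r:{0..R0}. r\<^sup>2 * \<phi> r * omega R0 n r)"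

definition centered_gaussian_rv :: "'a measure \<Rightarrow> ('a \<Rightarrow> real) \<Rightarrow> bool" where
  "centered_gaussian_rv M X \<longleftrightarrow> X \<in> borel_measurable M \<and>
     ((AE \<omega> in M. X \<omega> = 0) \<or> (\<exists>\<sigma>>0. distributed M lborel X (normal_density 0 \<sigma>)))"

definition is_fBm :: "'a measure \<Rightarrow> real \<Rightarrow> (real \<Rightarrow> 'a \<Rightarrow> real) \<Rightarrow> bool" where
  "is_fBm M H B \<longleftrightarrow>
     (\<forall>t\<ge>0. B t \<in> borel_measurable M) \<and>
     (\<forall>\<omega>\<in>space M. B 0 \<omega> = 0) \<and>
     (\<forall>\<omega>\<in>space M. continuous_on {0..} (\<lambda>t. B t \<omega>)) \<and>
     (\<forall>I c. finite I \<longrightarrow> I \<subseteq> {0..} \<longrightarrow>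
        centered_gaussian_rv M (\<lambda>\<omega>. \<Sum>t\<in>I. c t * B t \<omega>)) \<and>
     (\<forall>t\<ge>0. \<forall>s\<ge>0. integral\<^sup>L M (\<lambda>\<omega>. B t \<omega> * B s \<omega>) =
        (t powr (2 * H) + s powr (2 * H) - \<bar>t - s\<bar> powr (2 * H)) / 2)"

text \<open>Integral of a deterministic integrand psi over [0,t] against the path of B, defined as
  the limit of Riemann--Stieltjes sums over uniform partitions (for the continuous,
  bounded-variation integrands used here this is the Wiener integral).\<close>
definition wiener_integral :: "(real \<Rightarrow> 'a \<Rightarrow> real) \<Rightarrow> (real \<Rightarrow> real) \<Rightarrow> real \<Rightarrow> 'a \<Rightarrow> real" where
  "wiener_integral B \<psi> t \<omega> =
     lim (\<lambda>N. \<Sum>k<N. \<psi> (t * real k / real N) *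
                 (B (t * real (Suc k) / real N) \<omega> - B (t * real k / real N) \<omega>))"

definition kern :: "real \<Rightarrow> (real \<Rightarrow> real) \<Rightarrow> nat \<Rightarrow> real \<Rightarrow> real \<Rightarrow> real" where
  "kern R0 a n t \<tau> = exp (- lam R0 n * (LBINT s:{\<tau>..t}. a s))"

definition mild_coeff :: "real \<Rightarrow> (real \<Rightarrow> real) \<Rightarrow> (real \<Rightarrow> 'a \<Rightarrow> real) \<Rightarrow> (real \<Rightarrow> real) \<Rightarrow>
    (real \<Rightarrow> real) \<Rightarrow> (real \<Rightarrow> real) \<Rightarrow> nat \<Rightarrow> real \<Rightarrow> 'a \<Rightarrow> real" where
  "mild_coeff R0 a B f g h n t \<omega> =
     coeff R0 f n * (LBINT \<tau>:{0..t}. h \<tau> * kern R0 a n t \<tau>)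
     + coeff R0 g n * wiener_integral B (kern R0 a n t) t \<omega>"

definition is_mild_solution :: "'a measure \<Rightarrow> real \<Rightarrow> real \<Rightarrow> (real \<Rightarrow> real) \<Rightarrow> (real \<Rightarrow> 'a \<Rightarrow> real) \<Rightarrow>
    (real \<Rightarrow> real) \<Rightarrow> (real \<Rightarrow> real) \<Rightarrow> (real \<Rightarrow> real) \<Rightarrow> (real \<Rightarrow> real \<Rightarrow> 'a \<Rightarrow> real) \<Rightarrow> bool" where
  "is_mild_solution M R0 T a B f g h u \<longleftrightarrow>
     (\<forall>t\<in>{0..T}. \<forall>\<omega>\<in>space M.
        (\<lambda>r. u r t \<omega>) \<in> borel_measurable lborel \<and>
        ((\<lambda>N. \<integral>\<^sup>+ r\<in>{0..R0}. ennreal (r\<^sup>2 * (u r t \<omega> -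
             (\<Sum>n=1..N. mild_coeff R0 a B f g h n t \<omega> * omega R0 n r))\<^sup>2) \<partial>lborel)
          \<longlonglongrightarrow> 0))"

end

theory Submission
  imports Defs
begin

lemma omega_r:
  assumes "R0 > 0"
  shows "r * omega R0 n r = sqrt (2 / R0) * sin (real n * pi * r / R0)"
proof (cases "r = 0 \<or> n = 0")
  case True then show ?thesis by (auto simp: omega_def)
next
  case False
  have s: "sqrt (R0 ^ 3) = R0 * sqrt R0" using assms
    by (simp add: power3_eq_cube real_sqrt_mult)
  have "r * omega R0 n r = sqrt 2 * R0 / sqrt (R0^3) * sin (real n * pi * r / R0)"
    using False assms by (simp add: omega_def field_simps)
  also have "sqrt 2 * R0 / sqrt (R0^3) = sqrt (2 / R0)"
    using assms by (simp add: s real_sqrt_divide field_simps)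
  finally show ?thesis .
qed

lemma omega_meas[measurable]: "omega R0 n \<in> borel_measurable borel"
  unfolding omega_def by measurable

lemma sin_sin_int:
  assumes R0: "R0 > 0" and n: "n \<ge> 1" and m: "m \<ge> 1"
  shows "(LBINT r:{0..R0}. sin (real n * pi * r / R0) * sin (real m * pi * r / R0))
         = (if n = m then R0 / 2 else 0)"
proof -
  define c where "c = real n * pi / R0"
  define d where "d = real m * pi / R0"
  have cpos: "c > 0" using R0 n by (simp add: c_def)
  have dpos: "d > 0" using R0 m by (simp add: d_def)
  have eq: "\<And>r. sin (real n * pi * r / R0) * sin (real m * pi * r / R0) = sin (c * r) * sin (d * r)"
    by (simp add: c_def d_def)
  have "(LBINT r:{0..R0}. sin (c * r) * sin (d * r)) = (LBINT r=ereal 0..ereal R0. sin (c * r) * sin (d * r))"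
    using R0 interval_integral_Icc[of 0 R0 "\<lambda>r. sin (c * r) * sin (d * r)"] by (simp add: zero_ereal_def)
  also have "\<dots> = (if n = m then R0 / 2 else 0)"
  proof (cases "n = m")
    case True
    then have cd: "d = c" by (simp add: c_def d_def)
    define F where "F = (\<lambda>r. r / 2 - sin (2 * c * r) / (4 * c))"
    have "(LBINT r=ereal 0..ereal R0. sin (c * r) * sin (d * r)) = F R0 - F 0"
    proof (rule interval_integral_FTC_finite)
      show "continuous_on {min 0 R0..max 0 R0} (\<lambda>r. sin (c * r) * sin (d * r))"
        by (intro continuous_intros)
      fix x
      have "(F has_real_derivative (1/2 - cos (2 * c * x) * (2 * c) / (4 * c))) (at x)"
        unfolding F_def by (auto intro!: derivative_eq_intros)
      moreover have "1/2 - cos (2 * c * x) * (2 * c) / (4 * c) = sin (c * x) * sin (d * x)"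
      proof -
        have "cos (2 * c * x) = 1 - 2 * (sin (c * x))\<^sup>2" using cos_double_sin[of "c * x"] by (simp add: ac_simps)
        then show ?thesis using cpos by (simp add: cd power2_eq_square field_simps)
      qed
      ultimately show "(F has_vector_derivative sin (c * x) * sin (d * x)) (at x within {min 0 R0..max 0 R0})"
        by (simp add: has_real_derivative_iff_has_vector_derivative[symmetric] has_field_derivative_at_within)
    qed
    also have "F R0 - F 0 = R0 / 2"
    proof -
      have "2 * c * R0 = real (2 * n) * pi" using R0 by (simp add: c_def)
      then have "sin (2 * c * R0) = 0" by (metis sin_npi)
      then show ?thesis by (simp add: F_def)
    qed
    finally show ?thesis using True by simp
  next
    case False
    have cd: "c - d \<noteq> 0" using False R0 by (simp add: c_def d_def field_simps)
    have cd2: "c + d \<noteq> 0" using cpos dpos by simp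
    define F where "F = (\<lambda>r. (sin ((c - d) * r) / (c - d) - sin ((c + d) * r) / (c + d)) / 2)"
    have "(LBINT r=ereal 0..ereal R0. sin (c * r) * sin (d * r)) = F R0 - F 0"
    proof (rule interval_integral_FTC_finite)
      show "continuous_on {min 0 R0..max 0 R0} (\<lambda>r. sin (c * r) * sin (d * r))"
        by (intro continuous_intros)
      fix x
      have d1: "((\<lambda>r. sin ((c - d) * r) / (c - d)) has_real_derivative cos ((c - d) * x)) (at x)"
        using cd by (auto intro!: derivative_eq_intros)
      have d2: "((\<lambda>r. sin ((c + d) * r) / (c + d)) has_real_derivative cos ((c + d) * x)) (at x)"
        using cd2 by (auto intro!: derivative_eq_intros)
      have "(F has_real_derivative ((cos ((c - d) * x) - cos ((c + d) * x)) / 2)) (at x)"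
        unfolding F_def by (intro DERIV_cdivide DERIV_diff d1 d2)
      moreover have "(cos ((c - d) * x) - cos ((c + d) * x)) / 2 = sin (c * x) * sin (d * x)"
        by (simp add: sin_times_sin left_diff_distrib distrib_right)
      ultimately show "(F has_vector_derivative sin (c * x) * sin (d * x)) (at x within {min 0 R0..max 0 R0})"
        by (simp add: has_real_derivative_iff_has_vector_derivative[symmetric] has_field_derivative_at_within)
    qed
    also have "F R0 - F 0 = 0"
    proof -
      have "(c - d) * R0 = pi * of_int (int n - int m)" using R0 by (simp add: c_def d_def field_simps)
      then have 1: "sin ((c - d) * R0) = 0" by (metis sin_npi_int)
      have "(c + d) * R0 = real (n + m) * pi" using R0 by (simp add: c_def d_def field_simps)
      then have 2: "sin ((c + d) * R0) = 0" by (metis sin_npi)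
      show ?thesis by (simp add: F_def 1 2)
    qed
    finally show ?thesis using False by simp
  qed
  finally show ?thesis by (simp add: eq)
qed

lemma abs_prod_le_sq: "\<bar>(x::real) * y\<bar> \<le> x\<^sup>2 + y\<^sup>2"
proof -
  have "0 \<le> (\<bar>x\<bar> - \<bar>y\<bar>)\<^sup>2" by simp
  also have "(\<bar>x\<bar> - \<bar>y\<bar>)\<^sup>2 = x\<^sup>2 - 2 * (\<bar>x\<bar> * \<bar>y\<bar>) + y\<^sup>2"
    by (simp add: power2_eq_square algebra_simps abs_mult_self_eq)
  finally have "2 * (\<bar>x\<bar> * \<bar>y\<bar>) \<le> x\<^sup>2 + y\<^sup>2" by linarith
  moreover have "0 \<le> \<bar>x\<bar> * \<bar>y\<bar>" by simp
  ultimately have "\<bar>x\<bar> * \<bar>y\<bar> \<le> x\<^sup>2 + y\<^sup>2" by linarith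
  then show ?thesis by (simp add: abs_mult)
qed

lemma sq_prod_integrable:
  fixes f g :: "'a \<Rightarrow> real"
  assumes [measurable]: "f \<in> borel_measurable N" "g \<in> borel_measurable N"
    and "integrable N (\<lambda>x. (f x)\<^sup>2)" "integrable N (\<lambda>x. (g x)\<^sup>2)"
  shows "integrable N (\<lambda>x. f x * g x)"
proof (rule Bochner_Integration.integrable_bound[where f="\<lambda>x. (f x)\<^sup>2 + (g x)\<^sup>2"])
  show "integrable N (\<lambda>x. (f x)\<^sup>2 + (g x)\<^sup>2)" using assms by auto
  show "AE x in N. norm (f x * g x) \<le> norm ((f x)\<^sup>2 + (g x)\<^sup>2)"
  proof (intro AE_I2)
    fix x
    have "0 \<le> (f x)\<^sup>2 + (g x)\<^sup>2" by simp
    then have "norm ((f x)\<^sup>2 + (g x)\<^sup>2) = (f x)\<^sup>2 + (g x)\<^sup>2" by simp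
    then show "norm (f x * g x) \<le> norm ((f x)\<^sup>2 + (g x)\<^sup>2)"
      using abs_prod_le_sq[of "f x" "g x"] by simp
  qed
qed measurable

lemma sq_expand: "(\<Sum>n\<in>I. (c n::real) * e n)\<^sup>2 = (\<Sum>n\<in>I. \<Sum>m\<in>I. c n * c m * (e n * e m))"
  by (simp add: power2_eq_square sum_product algebra_simps)

lemma ortho_sum_sq:
  fixes e :: "nat \<Rightarrow> 'a \<Rightarrow> real"
  assumes I: "finite I"
    and int: "\<And>n m. n \<in> I \<Longrightarrow> m \<in> I \<Longrightarrow> integrable N (\<lambda>x. e n x * e m x)"
    and on: "\<And>n m. n \<in> I \<Longrightarrow> m \<in> I \<Longrightarrow> (\<integral>x. e n x * e m x \<partial>N) = (if n = m then 1 else 0)"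
  shows "integrable N (\<lambda>x. (\<Sum>n\<in>I. c n * e n x)\<^sup>2)"
    and "(\<integral>x. (\<Sum>n\<in>I. c n * e n x)\<^sup>2 \<partial>N) = (\<Sum>n\<in>I. (c n)\<^sup>2)"
proof -
  have eq: "(\<lambda>x. (\<Sum>n\<in>I. c n * e n x)\<^sup>2) = (\<lambda>x. \<Sum>n\<in>I. \<Sum>m\<in>I. c n * c m * (e n x * e m x))"
    by (simp add: sq_expand)
  show "integrable N (\<lambda>x. (\<Sum>n\<in>I. c n * e n x)\<^sup>2)"
    unfolding eq using int by (intro Bochner_Integration.integrable_sum integrable_mult_right) auto
  have "(\<integral>x. (\<Sum>n\<in>I. c n * e n x)\<^sup>2 \<partial>N) = (\<Sum>n\<in>I. \<Sum>m\<in>I. c n * c m * (\<integral>x. e n x * e m x \<partial>N))"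
    unfolding eq using int by (simp add: Bochner_Integration.integral_sum Bochner_Integration.integrable_sum integrable_mult_right)
  also have "\<dots> = (\<Sum>n\<in>I. \<Sum>m\<in>I. c n * c m * (if n = m then 1 else 0))"
    using on by (intro sum.cong refl) auto
  also have "\<dots> = (\<Sum>n\<in>I. (c n)\<^sup>2)"
    using I by (simp add: power2_eq_square if_distrib cong: if_cong)
  finally show "(\<integral>x. (\<Sum>n\<in>I. c n * e n x)\<^sup>2 \<partial>N) = (\<Sum>n\<in>I. (c n)\<^sup>2)" .
qed

lemma bessel_gen:
  fixes e :: "nat \<Rightarrow> 'a \<Rightarrow> real" and \<phi> :: "'a \<Rightarrow> real"
  assumes I: "finite I"
    and int: "\<And>n m. n \<in> I \<Longrightarrow> m \<in> I \<Longrightarrow> integrable N (\<lambda>x. e n x * e m x)"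
    and on: "\<And>n m. n \<in> I \<Longrightarrow> m \<in> I \<Longrightarrow> (\<integral>x. e n x * e m x \<partial>N) = (if n = m then 1 else 0)"
    and intp: "\<And>n. n \<in> I \<Longrightarrow> integrable N (\<lambda>x. \<phi> x * e n x)"
    and int2: "integrable N (\<lambda>x. (\<phi> x)\<^sup>2)"
  shows "(\<Sum>n\<in>I. (\<integral>x. \<phi> x * e n x \<partial>N)\<^sup>2) \<le> (\<integral>x. (\<phi> x)\<^sup>2 \<partial>N)"
proof -
  define c where "c n = (\<integral>x. \<phi> x * e n x \<partial>N)" for n
  define S where "S x = (\<Sum>n\<in>I. c n * e n x)" for x
  have iS: "integrable N (\<lambda>x. (S x)\<^sup>2)" and vS: "(\<integral>x. (S x)\<^sup>2 \<partial>N) = (\<Sum>n\<in>I. (c n)\<^sup>2)"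
    unfolding S_def using ortho_sum_sq[OF I int on] by auto
  have pS_eq: "(\<lambda>x. \<phi> x * S x) = (\<lambda>x. \<Sum>n\<in>I. c n * (\<phi> x * e n x))"
    by (simp add: S_def sum_distrib_left algebra_simps)
  have ipS: "integrable N (\<lambda>x. \<phi> x * S x)"
    unfolding pS_eq using intp by (intro Bochner_Integration.integrable_sum integrable_mult_right) auto
  have vpS: "(\<integral>x. \<phi> x * S x \<partial>N) = (\<Sum>n\<in>I. (c n)\<^sup>2)"
    unfolding pS_eq using intp by (simp add: Bochner_Integration.integral_sum integrable_mult_right c_def power2_eq_square)
  have "0 \<le> (\<integral>x. (\<phi> x - S x)\<^sup>2 \<partial>N)" by simp
  also have "(\<lambda>x. (\<phi> x - S x)\<^sup>2) = (\<lambda>x. (\<phi> x)\<^sup>2 - 2 * (\<phi> x * S x) + (S x)\<^sup>2)"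
    by (simp add: power2_eq_square algebra_simps)
  also have "(\<integral>x. (\<phi> x)\<^sup>2 - 2 * (\<phi> x * S x) + (S x)\<^sup>2 \<partial>N)
      = (\<integral>x. (\<phi> x)\<^sup>2 \<partial>N) - 2 * (\<integral>x. \<phi> x * S x \<partial>N) + (\<integral>x. (S x)\<^sup>2 \<partial>N)"
    using int2 ipS iS by simp
  finally have "0 \<le> (\<integral>x. (\<phi> x)\<^sup>2 \<partial>N) - 2 * (\<integral>x. \<phi> x * S x \<partial>N) + (\<integral>x. (S x)\<^sup>2 \<partial>N)" .
  then have "(\<Sum>n\<in>I. (c n)\<^sup>2) \<le> (\<integral>x. (\<phi> x)\<^sup>2 \<partial>N)" unfolding vpS vS by linarith
  then show ?thesis by (simp only: c_def)
qed

definition EE :: "real \<Rightarrow> nat \<Rightarrow> real \<Rightarrow> real" where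
  "EE R0 n r = indicator {0..R0} r * (r * omega R0 n r)"

lemma EE_meas[measurable]: "EE R0 n \<in> borel_measurable borel"
  unfolding EE_def by measurable

lemma EE_ortho:
  assumes R0: "R0 > 0" and n: "n \<ge> 1" and m: "m \<ge> 1"
  shows "integrable lborel (\<lambda>r. EE R0 n r * EE R0 m r)"
    and "(\<integral>r. EE R0 n r * EE R0 m r \<partial>lborel) = (if n = m then 1 else 0)"
proof -
  have eq: "(\<lambda>r. EE R0 n r * EE R0 m r) = (\<lambda>r. indicator {0..R0} r *\<^sub>R (2 / R0 * (sin (real n * pi * r / R0) * sin (real m * pi * r / R0))))"
  proof (rule ext)
    fix r
    have sq: "sqrt (2 / R0) * sqrt (2 / R0) = 2 / R0" using R0 by simp
    have ii: "indicator {0..R0} r * indicator {0..R0} r = (indicator {0..R0} r :: real)"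
      by (simp add: indicator_def)
    have "EE R0 n r * EE R0 m r = (indicator {0..R0} r * indicator {0..R0} r) * (sqrt (2 / R0) * sqrt (2 / R0)) *
        (sin (real n * pi * r / R0) * sin (real m * pi * r / R0))"
      unfolding EE_def omega_r[OF R0] by (simp only: mult_ac)
    also have "\<dots> = indicator {0..R0} r *\<^sub>R (2 / R0 * (sin (real n * pi * r / R0) * sin (real m * pi * r / R0)))"
      unfolding ii sq by simp
    finally show "EE R0 n r * EE R0 m r = indicator {0..R0} r *\<^sub>R (2 / R0 * (sin (real n * pi * r / R0) * sin (real m * pi * r / R0)))" .
  qed
  have si: "set_integrable lborel {0..R0} (\<lambda>r. 2 / R0 * (sin (real n * pi * r / R0) * sin (real m * pi * r / R0)))"
    using R0 by (intro borel_integrable_atLeastAtMost' continuous_intros) auto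
  show "integrable lborel (\<lambda>r. EE R0 n r * EE R0 m r)"
    unfolding eq using si unfolding set_integrable_def .
  have "(\<integral>r. EE R0 n r * EE R0 m r \<partial>lborel) = 2 / R0 * (LBINT r:{0..R0}. sin (real n * pi * r / R0) * sin (real m * pi * r / R0))"
  proof -
    have "(\<integral>r. EE R0 n r * EE R0 m r \<partial>lborel) = (LBINT r:{0..R0}. 2 / R0 * (sin (real n * pi * r / R0) * sin (real m * pi * r / R0)))"
      unfolding eq set_lebesgue_integral_def ..
    also have "\<dots> = 2 / R0 * (LBINT r:{0..R0}. sin (real n * pi * r / R0) * sin (real m * pi * r / R0))"
      by (rule set_integral_mult_right)
    finally show ?thesis .
  qed
  also have "\<dots> = (if n = m then 1 else 0)"
    using sin_sin_int[OF R0 n m] R0 by simp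
  finally show "(\<integral>r. EE R0 n r * EE R0 m r \<partial>lborel) = (if n = m then 1 else 0)" .
qed

lemma coeff_zero: "coeff R0 \<phi> 0 = 0"
  by (simp add: coeff_def omega_def)

lemma bessel:
  assumes R0: "R0 > 0"
    and i2: "set_integrable lborel {0..R0} (\<lambda>r. r\<^sup>2 * (\<phi> r)\<^sup>2)"
    and m: "set_borel_measurable lborel {0..R0} \<phi>"
  shows "(\<Sum>n\<in>{1..K}. (coeff R0 \<phi> n)\<^sup>2) \<le> wnorm2 R0 \<phi>"
proof -
  define F where "F r = r * (indicator {0..R0} r *\<^sub>R \<phi> r)" for r
  have Fm[measurable]: "F \<in> borel_measurable lborel"
    using m unfolding set_borel_measurable_def F_def by measurable
  have F2: "(\<lambda>r. (F r)\<^sup>2) = (\<lambda>r. indicator {0..R0} r *\<^sub>R (r\<^sup>2 * (\<phi> r)\<^sup>2))"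
    by (auto simp: F_def indicator_def power2_eq_square fun_eq_iff)
  have iF2: "integrable lborel (\<lambda>r. (F r)\<^sup>2)"
    using i2 unfolding F2 set_integrable_def .
  have wn: "wnorm2 R0 \<phi> = (\<integral>r. (F r)\<^sup>2 \<partial>lborel)"
    unfolding wnorm2_def F2 set_lebesgue_integral_def ..
  have FE: "(\<lambda>r. F r * EE R0 n r) = (\<lambda>r. indicator {0..R0} r *\<^sub>R (r\<^sup>2 * \<phi> r * omega R0 n r))" for n
    by (auto simp: F_def EE_def indicator_def power2_eq_square fun_eq_iff)
  have co: "coeff R0 \<phi> n = (\<integral>r. F r * EE R0 n r \<partial>lborel)" for n
    unfolding coeff_def FE set_lebesgue_integral_def ..
  have iFE: "integrable lborel (\<lambda>r. F r * EE R0 n r)" if "n \<ge> 1" for n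
    using EE_ortho(1)[OF R0 that that] iF2
    by (intro sq_prod_integrable) (auto simp: power2_eq_square)
  have "(\<Sum>n\<in>{1..K}. (\<integral>r. F r * EE R0 n r \<partial>lborel)\<^sup>2) \<le> (\<integral>r. (F r)\<^sup>2 \<partial>lborel)"
    by (rule bessel_gen[where e="EE R0"]) (use EE_ortho[OF R0] iFE iF2 in auto)
  then show ?thesis unfolding co wn .
qed

lemma sq_split: "(a::real)\<^sup>2 \<le> 2 * (a - b)\<^sup>2 + 2 * b\<^sup>2"
proof -
  have "0 \<le> (a - 2 * b)\<^sup>2" by simp
  then show ?thesis by (simp add: power2_eq_square algebra_simps)
qed

lemma L2bound:
  fixes u :: "real \<Rightarrow> real" and c :: "nat \<Rightarrow> real"
  assumes R0: "R0 > 0"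
    and um[measurable]: "u \<in> borel_measurable lborel"
    and lim: "(\<lambda>N. \<integral>\<^sup>+ r\<in>{0..R0}. ennreal (r\<^sup>2 * (u r - (\<Sum>n=1..N. c n * omega R0 n r))\<^sup>2) \<partial>lborel) \<longlonglongrightarrow> 0"
  shows "(\<integral>\<^sup>+ r\<in>{0..R0}. ennreal (r\<^sup>2 * (u r)\<^sup>2) \<partial>lborel) \<le> 2 * (\<Sum>n. ennreal ((c n)\<^sup>2))"
proof -
  define U where "U r = indicator {0..R0} r * (r * u r)" for r
  define S where "S K r = (\<Sum>n\<in>{1..K}. c n * EE R0 n r)" for K r
  define e where "e N = (\<integral>\<^sup>+ r\<in>{0..R0}. ennreal (r\<^sup>2 * (u r - (\<Sum>n=1..N. c n * omega R0 n r))\<^sup>2) \<partial>lborel)" for N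
  have Um[measurable]: "U \<in> borel_measurable lborel" unfolding U_def by measurable
  have Sm[measurable]: "S K \<in> borel_measurable lborel" for K unfolding S_def by measurable
  have eU: "ennreal (r\<^sup>2 * (u r)\<^sup>2) * indicator {0..R0} r = ennreal ((U r)\<^sup>2)" for r
    by (auto simp: U_def indicator_def power2_eq_square algebra_simps)
  have eS: "ennreal (r\<^sup>2 * (u r - (\<Sum>n=1..N. c n * omega R0 n r))\<^sup>2) * indicator {0..R0} r = ennreal ((U r - S N r)\<^sup>2)" for N r
  proof (cases "r \<in> {0..R0}")
    case True
    have "U r - S N r = r * (u r - (\<Sum>n=1..N. c n * omega R0 n r))"
      using True by (simp add: U_def S_def EE_def sum_distrib_left right_diff_distrib algebra_simps)
    then have "(U r - S N r)\<^sup>2 = r\<^sup>2 * (u r - (\<Sum>n=1..N. c n * omega R0 n r))\<^sup>2"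
      by (simp add: power_mult_distrib)
    then show ?thesis using True by simp
  next
    case False then show ?thesis by (simp add: U_def S_def EE_def)
  qed
  have SS: "(\<integral>\<^sup>+ r. ennreal ((S K r)\<^sup>2) \<partial>lborel) \<le> (\<Sum>n. ennreal ((c n)\<^sup>2))" for K
  proof -
    have int: "integrable lborel (\<lambda>r. (S K r)\<^sup>2)" and val: "(\<integral>r. (S K r)\<^sup>2 \<partial>lborel) = (\<Sum>n\<in>{1..K}. (c n)\<^sup>2)"
      unfolding S_def using ortho_sum_sq[of "{1..K}" lborel "EE R0" c] EE_ortho[OF R0] by auto
    have "(\<integral>\<^sup>+ r. ennreal ((S K r)\<^sup>2) \<partial>lborel) = ennreal (\<Sum>n\<in>{1..K}. (c n)\<^sup>2)"
      using nn_integral_eq_integral[OF int] val by simp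
    also have "\<dots> = (\<Sum>n\<in>{1..K}. ennreal ((c n)\<^sup>2))"
      by (rule sum_ennreal[symmetric]) simp
    also have "\<dots> \<le> (\<Sum>n. ennreal ((c n)\<^sup>2))"
      by (rule sum_le_suminf) auto
    finally show ?thesis .
  qed
  have bnd: "(\<integral>\<^sup>+ r\<in>{0..R0}. ennreal (r\<^sup>2 * (u r)\<^sup>2) \<partial>lborel) \<le> 2 * e K + 2 * (\<Sum>n. ennreal ((c n)\<^sup>2))" for K
  proof -
    have "(\<integral>\<^sup>+ r\<in>{0..R0}. ennreal (r\<^sup>2 * (u r)\<^sup>2) \<partial>lborel) = (\<integral>\<^sup>+ r. ennreal ((U r)\<^sup>2) \<partial>lborel)"
      by (simp add: eU)
    also have "\<dots> \<le> (\<integral>\<^sup>+ r. 2 * ennreal ((U r - S K r)\<^sup>2) + 2 * ennreal ((S K r)\<^sup>2) \<partial>lborel)"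
    proof (rule nn_integral_mono)
      fix r
      have "ennreal ((U r)\<^sup>2) \<le> ennreal (2 * (U r - S K r)\<^sup>2 + 2 * (S K r)\<^sup>2)"
        by (rule ennreal_leI) (rule sq_split)
      also have "\<dots> = 2 * ennreal ((U r - S K r)\<^sup>2) + 2 * ennreal ((S K r)\<^sup>2)"
        by (simp add: ennreal_plus[symmetric] ennreal_mult)
      finally show "ennreal ((U r)\<^sup>2) \<le> 2 * ennreal ((U r - S K r)\<^sup>2) + 2 * ennreal ((S K r)\<^sup>2)" .
    qed
    also have "\<dots> = 2 * (\<integral>\<^sup>+ r. ennreal ((U r - S K r)\<^sup>2) \<partial>lborel) + 2 * (\<integral>\<^sup>+ r. ennreal ((S K r)\<^sup>2) \<partial>lborel)"
      by (simp add: nn_integral_add nn_integral_cmult)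
    also have "(\<integral>\<^sup>+ r. ennreal ((U r - S K r)\<^sup>2) \<partial>lborel) = e K"
      unfolding e_def by (intro nn_integral_cong) (rule eS[symmetric])
    finally show ?thesis using SS[of K]
      by (meson add_left_mono mult_left_mono order_trans zero_le)
  qed
  have "(\<lambda>K. 2 * e K + 2 * (\<Sum>n. ennreal ((c n)\<^sup>2))) \<longlonglongrightarrow> 2 * 0 + 2 * (\<Sum>n. ennreal ((c n)\<^sup>2))"
    using lim unfolding e_def[symmetric] by (intro tendsto_intros) auto
  then show ?thesis
    by (intro tendsto_le[OF trivial_limit_sequentially _ tendsto_const]) (use bnd in auto)
qed

lemma a_set_integrable:
  fixes a :: "real \<Rightarrow> real"
  assumes a: "\<forall>t\<in>{0..T}. a0 \<le> a t \<and> a t \<le> a1" and a0: "0 < a0"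
    and am: "set_borel_measurable lborel {0..T} a"
    and S: "S \<in> sets lborel" "S \<subseteq> {0..T}"
  shows "set_integrable lborel S a"
proof -
  have "set_integrable lborel {0..T} a"
    unfolding set_integrable_def
  proof (rule Bochner_Integration.integrable_bound[where f="\<lambda>x. a1 * indicator {0..T} x"])
    show "integrable lborel (\<lambda>x. a1 * indicator {0..T} x :: real)"
      by (intro integrable_mult_right integrable_real_indicator) (auto simp: emeasure_lborel_Icc_eq)
    show "(\<lambda>x. indicator {0..T} x *\<^sub>R a x) \<in> borel_measurable lborel"
      using am unfolding set_borel_measurable_def .
    show "AE x in lborel. norm (indicator {0..T} x *\<^sub>R a x) \<le> norm (a1 * indicator {0..T} x :: real)"
    proof (intro AE_I2)
      fix x
      show "norm (indicator {0..T} x *\<^sub>R a x) \<le> norm (a1 * indicator {0..T} x :: real)"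
      proof (cases "x \<in> {0..T}")
        case True
        then have "a0 \<le> a x" "a x \<le> a1" using a by auto
        then show ?thesis using True a0 by simp
      qed simp
    qed
  qed
  then show ?thesis using S by (rule set_integrable_subset)
qed

lemma a_int_nonneg:
  fixes a :: "real \<Rightarrow> real"
  assumes a: "\<forall>t\<in>{0..T}. a0 \<le> a t \<and> a t \<le> a1" and a0: "0 < a0"
    and S: "S \<subseteq> {0..T}"
  shows "0 \<le> (LBINT s:S. a s)"
  unfolding set_lebesgue_integral_def
proof (intro Bochner_Integration.integral_nonneg_AE AE_I2)
  fix x
  show "0 \<le> indicator S x *\<^sub>R a x"
  proof (cases "x \<in> S")
    case True
    then have "a0 \<le> a x" using a S by auto
    then show ?thesis using True a0 by simp
  qed simp
qed

lemma kern_props: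
  fixes a :: "real \<Rightarrow> real"
  assumes a: "\<forall>t\<in>{0..T}. a0 \<le> a t \<and> a t \<le> a1" and a0: "0 < a0"
    and am: "set_borel_measurable lborel {0..T} a"
    and t: "t \<le> T"
  shows "\<And>\<tau>. 0 \<le> \<tau> \<Longrightarrow> 0 < kern R0 a n t \<tau>"
    and "\<And>\<tau>. 0 \<le> \<tau> \<Longrightarrow> kern R0 a n t \<tau> \<le> 1"
    and "\<And>\<tau>1 \<tau>2. 0 \<le> \<tau>1 \<Longrightarrow> \<tau>1 \<le> \<tau>2 \<Longrightarrow> \<tau>2 \<le> t \<Longrightarrow> kern R0 a n t \<tau>1 \<le> kern R0 a n t \<tau>2"
proof -
  have lam: "0 \<le> lam R0 n" by (simp add: lam_def)
  show "0 < kern R0 a n t \<tau>" for \<tau> by (simp add: kern_def)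
  show "kern R0 a n t \<tau> \<le> 1" if "0 \<le> \<tau>" for \<tau>
  proof -
    have "0 \<le> (LBINT s:{\<tau>..t}. a s)" using that t by (intro a_int_nonneg[OF a a0]) auto
    then have "0 \<le> lam R0 n * (LBINT s:{\<tau>..t}. a s)" using lam by simp
    then show ?thesis by (simp add: kern_def)
  qed
  show "kern R0 a n t \<tau>1 \<le> kern R0 a n t \<tau>2" if h: "0 \<le> \<tau>1" "\<tau>1 \<le> \<tau>2" "\<tau>2 \<le> t" for \<tau>1 \<tau>2
  proof -
    have un: "{\<tau>1..t} = {\<tau>1..<\<tau>2} \<union> {\<tau>2..t}" using h by auto
    have "(LBINT s:{\<tau>1..t}. a s) = (LBINT s:{\<tau>1..<\<tau>2}. a s) + (LBINT s:{\<tau>2..t}. a s)"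
      unfolding un using h t
      by (intro set_integral_Un a_set_integrable[OF a a0 am]) auto
    moreover have "0 \<le> (LBINT s:{\<tau>1..<\<tau>2}. a s)" using h t by (intro a_int_nonneg[OF a a0]) auto
    ultimately have "(LBINT s:{\<tau>2..t}. a s) \<le> (LBINT s:{\<tau>1..t}. a s)" by simp
    then have "lam R0 n * (LBINT s:{\<tau>2..t}. a s) \<le> lam R0 n * (LBINT s:{\<tau>1..t}. a s)"
      using lam by (rule mult_left_mono)
    then show ?thesis by (simp add: kern_def)
  qed
qed

lemma cs_real:
  fixes a b c :: real
  assumes a: "0 \<le> a" and b: "0 \<le> b" and h: "\<And>\<alpha>. 0 < \<alpha> \<Longrightarrow> 2 * \<bar>c\<bar> \<le> \<alpha> * a + b / \<alpha>"
  shows "\<bar>c\<bar> \<le> sqrt a * sqrt b"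
proof (rule ccontr)
  assume "\<not> ?thesis"
  then have lt: "sqrt (a * b) < \<bar>c\<bar>" by (simp add: real_sqrt_mult)
  have cpos: "0 < \<bar>c\<bar>" using lt by (smt (verit) real_sqrt_ge_zero a b mult_nonneg_nonneg)
  have ab0: "0 \<le> a * b" using a b by simp
  have "sqrt (a * b) ^ 2 < \<bar>c\<bar> ^ 2" using lt ab0 by (intro power_strict_mono) auto
  then have ab: "a * b < c ^ 2" using ab0 by simp
  show False
  proof (cases "a = 0")
    case False
    then have apos: "0 < a" using a by simp
    define \<alpha> where "\<alpha> = \<bar>c\<bar> / a"
    have alpos: "0 < \<alpha>" using apos cpos by (simp add: \<alpha>_def)
    have "\<alpha> * a = \<bar>c\<bar>" using apos by (simp add: \<alpha>_def)
    moreover have "b / \<alpha> = a * b / \<bar>c\<bar>" using apos cpos by (simp add: \<alpha>_def field_simps)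
    moreover have "a * b / \<bar>c\<bar> < \<bar>c\<bar>" using ab cpos by (simp add: divide_less_eq power2_eq_square abs_mult_self_eq)
    ultimately show False using h[OF alpos] by linarith
  next
    case True
    define \<alpha> where "\<alpha> = (b + 1) / \<bar>c\<bar>"
    have alpos: "0 < \<alpha>" using b cpos by (simp add: \<alpha>_def)
    have "b / \<alpha> = b * \<bar>c\<bar> / (b + 1)" using b cpos by (simp add: \<alpha>_def field_simps)
    moreover have "b * \<bar>c\<bar> / (b + 1) < \<bar>c\<bar>" using b cpos by (simp add: divide_less_eq)
    ultimately show False using h[OF alpos] True by simp
  qed
qed

lemma CS_int:
  fixes X Y :: "'a \<Rightarrow> real"
  assumes [measurable]: "X \<in> borel_measurable M" "Y \<in> borel_measurable M"
    and iX: "integrable M (\<lambda>x. (X x)\<^sup>2)" and iY: "integrable M (\<lambda>x. (Y x)\<^sup>2)"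
  shows "\<bar>\<integral>x. X x * Y x \<partial>M\<bar> \<le> sqrt (\<integral>x. (X x)\<^sup>2 \<partial>M) * sqrt (\<integral>x. (Y x)\<^sup>2 \<partial>M)"
proof (rule cs_real)
  show "0 \<le> (\<integral>x. (X x)\<^sup>2 \<partial>M)" "0 \<le> (\<integral>x. (Y x)\<^sup>2 \<partial>M)" by simp_all
  have iXY: "integrable M (\<lambda>x. X x * Y x)" by (rule sq_prod_integrable) (use iX iY in auto)
  fix \<alpha> :: real assume al: "0 < \<alpha>"
  have pw: "0 \<le> \<alpha> * (X x)\<^sup>2 + (Y x)\<^sup>2 / \<alpha> + s * 2 * (X x * Y x)" if s: "s = 1 \<or> s = -1" for x s
  proof -
    have "0 \<le> (\<alpha> * X x + s * Y x)\<^sup>2 / \<alpha>" using al by simp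
    also have "(\<alpha> * X x + s * Y x)\<^sup>2 / \<alpha> = \<alpha> * (X x)\<^sup>2 + (Y x)\<^sup>2 / \<alpha> + s * 2 * (X x * Y x)"
      using al s by (auto simp: power2_eq_square field_simps)
    finally show ?thesis .
  qed
  have int: "0 \<le> \<alpha> * (\<integral>x. (X x)\<^sup>2 \<partial>M) + (\<integral>x. (Y x)\<^sup>2 \<partial>M) / \<alpha> + s * 2 * (\<integral>x. X x * Y x \<partial>M)"
    if s: "s = 1 \<or> s = -1" for s
  proof -
    have "0 \<le> (\<integral>x. \<alpha> * (X x)\<^sup>2 + (Y x)\<^sup>2 / \<alpha> + s * 2 * (X x * Y x) \<partial>M)"
      using pw[OF s] by (intro Bochner_Integration.integral_nonneg_AE AE_I2) auto
    also have "\<dots> = \<alpha> * (\<integral>x. (X x)\<^sup>2 \<partial>M) + (\<integral>x. (Y x)\<^sup>2 \<partial>M) / \<alpha> + s * 2 * (\<integral>x. X x * Y x \<partial>M)"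
      using iX iY iXY by simp
    finally show ?thesis .
  qed
  show "2 * \<bar>\<integral>x. X x * Y x \<partial>M\<bar> \<le> \<alpha> * (\<integral>x. (X x)\<^sup>2 \<partial>M) + (\<integral>x. (Y x)\<^sup>2 \<partial>M) / \<alpha>"
    using int[of 1] int[of "-1"] by (simp add: abs_if)
qed

lemma L2_sum_bound:
  fixes X :: "nat \<Rightarrow> 'a \<Rightarrow> real"
  assumes I: "finite I"
    and Xm[measurable]: "\<And>i. i \<in> I \<Longrightarrow> X i \<in> borel_measurable M"
    and iX: "\<And>i. i \<in> I \<Longrightarrow> integrable M (\<lambda>x. (X i x)\<^sup>2)"
  shows "integrable M (\<lambda>x. (\<Sum>i\<in>I. c i * X i x)\<^sup>2)"
    and "(\<integral>x. (\<Sum>i\<in>I. c i * X i x)\<^sup>2 \<partial>M) \<le> (\<Sum>i\<in>I. \<bar>c i\<bar> * sqrt (\<integral>x. (X i x)\<^sup>2 \<partial>M))\<^sup>2"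
proof -
  define \<sigma> where "\<sigma> i = sqrt (\<integral>x. (X i x)\<^sup>2 \<partial>M)" for i
  have iXX: "integrable M (\<lambda>x. X i x * X j x)" if "i \<in> I" "j \<in> I" for i j
    using that by (intro sq_prod_integrable iX Xm)
  have eq: "(\<lambda>x. (\<Sum>i\<in>I. c i * X i x)\<^sup>2) = (\<lambda>x. \<Sum>i\<in>I. \<Sum>j\<in>I. c i * c j * (X i x * X j x))"
    by (simp add: sq_expand)
  show "integrable M (\<lambda>x. (\<Sum>i\<in>I. c i * X i x)\<^sup>2)"
    unfolding eq using iXX by (intro Bochner_Integration.integrable_sum integrable_mult_right) auto
  have "(\<integral>x. (\<Sum>i\<in>I. c i * X i x)\<^sup>2 \<partial>M) = (\<Sum>i\<in>I. \<Sum>j\<in>I. c i * c j * (\<integral>x. X i x * X j x \<partial>M))"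
    unfolding eq using iXX by (simp add: Bochner_Integration.integral_sum Bochner_Integration.integrable_sum)
  also have "\<dots> \<le> (\<Sum>i\<in>I. \<Sum>j\<in>I. (\<bar>c i\<bar> * \<sigma> i) * (\<bar>c j\<bar> * \<sigma> j))"
  proof (intro sum_mono)
    fix i j assume ij: "i \<in> I" "j \<in> I"
    have "c i * c j * (\<integral>x. X i x * X j x \<partial>M) \<le> \<bar>c i * c j\<bar> * \<bar>\<integral>x. X i x * X j x \<partial>M\<bar>"
      by (metis abs_ge_self abs_mult)
    also have "\<dots> \<le> \<bar>c i * c j\<bar> * (\<sigma> i * \<sigma> j)"
      unfolding \<sigma>_def using ij by (intro mult_left_mono CS_int Xm iX) auto
    finally show "c i * c j * (\<integral>x. X i x * X j x \<partial>M) \<le> (\<bar>c i\<bar> * \<sigma> i) * (\<bar>c j\<bar> * \<sigma> j)"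
      by (simp add: abs_mult algebra_simps)
  qed
  also have "\<dots> = (\<Sum>i\<in>I. \<bar>c i\<bar> * \<sigma> i)\<^sup>2"
    by (simp add: power2_eq_square sum_product)
  finally show "(\<integral>x. (\<Sum>i\<in>I. c i * X i x)\<^sup>2 \<partial>M) \<le> (\<Sum>i\<in>I. \<bar>c i\<bar> * sqrt (\<integral>x. (X i x)\<^sup>2 \<partial>M))\<^sup>2"
    unfolding \<sigma>_def .
qed

lemma sbp: "(\<Sum>k<N. (p k::real) * (b (Suc k) - b k)) = p N * b N - p 0 * b 0 - (\<Sum>k<N. (p (Suc k) - p k) * b (Suc k))"
  by (induction N) (auto simp: algebra_simps)

definition RS :: "(real \<Rightarrow> 'a \<Rightarrow> real) \<Rightarrow> (real \<Rightarrow> real) \<Rightarrow> real \<Rightarrow> nat \<Rightarrow> 'a \<Rightarrow> real" where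
  "RS B \<psi> t N \<omega> = (\<Sum>k<N. \<psi> (t * real k / real N) *
                 (B (t * real (Suc k) / real N) \<omega> - B (t * real k / real N) \<omega>))"

lemma wiener_RS: "wiener_integral B \<psi> t \<omega> = lim (\<lambda>N. RS B \<psi> t N \<omega>)"
  by (simp add: wiener_integral_def RS_def)

lemma xk_bounds:
  assumes "0 \<le> t" "k \<le> N"
  shows "0 \<le> t * real k / real N" "t * real k / real N \<le> t"
proof -
  show "0 \<le> t * real k / real N" using assms by simp
  show "t * real k / real N \<le> t"
  proof (cases "N = 0")
    case False
    then have "real k / real N \<le> 1" using assms by simp
    then have "t * (real k / real N) \<le> t * 1" using assms by (intro mult_left_mono) auto
    then show ?thesis by simp
  qed (use assms in simp)
qed

lemma fBm_meas: "is_fBm M H B \<Longrightarrow> 0 \<le> s \<Longrightarrow> B s \<in> borel_measurable M"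
  by (simp add: is_fBm_def)

lemma fBm_zero: "is_fBm M H B \<Longrightarrow> \<omega> \<in> space M \<Longrightarrow> B 0 \<omega> = 0"
  by (simp add: is_fBm_def)

lemma fBm_cov: "is_fBm M H B \<Longrightarrow> 0 \<le> t \<Longrightarrow> 0 \<le> s \<Longrightarrow> integral\<^sup>L M (\<lambda>\<omega>. B t \<omega> * B s \<omega>) =
        (t powr (2 * H) + s powr (2 * H) - \<bar>t - s\<bar> powr (2 * H)) / 2"
  unfolding is_fBm_def by blast

lemma fBm_sq:
  assumes fBm: "is_fBm M H B" and s: "0 \<le> s"
  shows "integrable M (\<lambda>\<omega>. (B s \<omega>)\<^sup>2)" and "(\<integral>\<omega>. (B s \<omega>)\<^sup>2 \<partial>M) = s powr (2 * H)"
proof -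
  have cov: "(\<integral>\<omega>. (B s \<omega>)\<^sup>2 \<partial>M) = s powr (2 * H)"
    using fBm_cov[OF fBm s s] by (simp add: power2_eq_square)
  show "(\<integral>\<omega>. (B s \<omega>)\<^sup>2 \<partial>M) = s powr (2 * H)" by (rule cov)
  show "integrable M (\<lambda>\<omega>. (B s \<omega>)\<^sup>2)"
  proof (cases "s = 0")
    case True
    have "integrable M (\<lambda>\<omega>. 0 :: real)" by simp
    moreover have "\<And>\<omega>. \<omega> \<in> space M \<Longrightarrow> (B s \<omega>)\<^sup>2 = 0" using fBm_zero[OF fBm] True by simp
    ultimately show ?thesis using Bochner_Integration.integrable_cong[of M M "\<lambda>\<omega>. (B s \<omega>)\<^sup>2" "\<lambda>_. 0"] by simp
  next
    case False
    then have "0 < s powr (2 * H)" using s by simp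
    then show ?thesis using cov not_integrable_integral_eq by fastforce
  qed
qed

lemma RS_meas:
  assumes fBm: "is_fBm M H B" and t: "0 \<le> t"
  shows "(\<lambda>\<omega>. RS B \<psi> t N \<omega>) \<in> borel_measurable M"
  unfolding RS_def using fBm_meas[OF fBm] t
  by (intro borel_measurable_sum borel_measurable_times borel_measurable_diff borel_measurable_const) auto

lemma RS_bound:
  assumes fBm: "is_fBm M H B" and t: "0 \<le> t" and H: "0 \<le> H"
    and mono: "\<And>x y. 0 \<le> x \<Longrightarrow> x \<le> y \<Longrightarrow> y \<le> t \<Longrightarrow> \<psi> x \<le> \<psi> y"
    and rng: "\<And>x. 0 \<le> x \<Longrightarrow> x \<le> t \<Longrightarrow> 0 \<le> \<psi> x \<and> \<psi> x \<le> 1"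
  shows "integrable M (\<lambda>\<omega>. (RS B \<psi> t N \<omega>)\<^sup>2)"
    and "(\<integral>\<omega>. (RS B \<psi> t N \<omega>)\<^sup>2 \<partial>M) \<le> 4 * t powr (2 * H)"
proof -
  define x where "x k = t * real k / real N" for k
  have x0: "x 0 = 0" by (simp add: x_def)
  have xb: "0 \<le> x k" "k \<le> N \<Longrightarrow> x k \<le> t" for k
    using xk_bounds[OF t, of k N] t by (auto simp: x_def)
  define coef where "coef i = (case i of 0 \<Rightarrow> \<psi> (x N) | Suc k \<Rightarrow> - (\<psi> (x (Suc k)) - \<psi> (x k)))" for i
  define Z where "Z i = (case i of 0 \<Rightarrow> B (x N) | Suc k \<Rightarrow> B (x (Suc k)))" for i
  have Zpt: "\<exists>j. j \<le> N \<and> Z i = B (x j)" if "i < Suc N" for i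
  proof (cases i)
    case 0 then show ?thesis by (auto simp: Z_def)
  next
    case (Suc k) then show ?thesis using that by (intro exI[of _ "Suc k"]) (auto simp: Z_def)
  qed
  have eqRS: "RS B \<psi> t N \<omega> = (\<Sum>i<Suc N. coef i * Z i \<omega>)" if w: "\<omega> \<in> space M" for \<omega>
  proof -
    have "RS B \<psi> t N \<omega> = (\<Sum>k<N. \<psi> (x k) * (B (x (Suc k)) \<omega> - B (x k) \<omega>))"
      by (simp add: RS_def x_def)
    also have "\<dots> = \<psi> (x N) * B (x N) \<omega> - \<psi> (x 0) * B (x 0) \<omega> - (\<Sum>k<N. (\<psi> (x (Suc k)) - \<psi> (x k)) * B (x (Suc k)) \<omega>)"
      by (rule sbp)
    also have "\<dots> = \<psi> (x N) * B (x N) \<omega> + (\<Sum>k<N. (- (\<psi> (x (Suc k)) - \<psi> (x k))) * B (x (Suc k)) \<omega>)"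
    proof -
      have "(\<Sum>k<N. (- (\<psi> (x (Suc k)) - \<psi> (x k))) * B (x (Suc k)) \<omega>) = - (\<Sum>k<N. (\<psi> (x (Suc k)) - \<psi> (x k)) * B (x (Suc k)) \<omega>)"
        by (subst sum_negf[symmetric]) (intro sum.cong refl, simp add: algebra_simps)
      then show ?thesis using fBm_zero[OF fBm w] by (simp add: x0)
    qed
    also have "\<dots> = (\<Sum>i<Suc N. coef i * Z i \<omega>)"
      unfolding sum.lessThan_Suc_shift by (simp add: coef_def Z_def)
    finally show ?thesis .
  qed
  have Zm: "Z i \<in> borel_measurable M" if "i \<in> {..<Suc N}" for i
    using Zpt[of i] that xb fBm_meas[OF fBm] by auto
  have Zi: "integrable M (\<lambda>\<omega>. (Z i \<omega>)\<^sup>2)" if "i \<in> {..<Suc N}" for i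
    using Zpt[of i] that xb fBm_sq(1)[OF fBm] by auto
  have Zv: "sqrt (\<integral>\<omega>. (Z i \<omega>)\<^sup>2 \<partial>M) \<le> sqrt (t powr (2 * H))" if iN: "i \<in> {..<Suc N}" for i
  proof -
    obtain j where j: "j \<le> N" "Z i = B (x j)" using Zpt[of i] iN by auto
    have "(\<integral>\<omega>. (Z i \<omega>)\<^sup>2 \<partial>M) = x j powr (2 * H)" using j fBm_sq(2)[OF fBm xb(1)] by simp
    also have "\<dots> \<le> t powr (2 * H)" using j xb H by (intro powr_mono2) auto
    finally show ?thesis by simp
  qed
  have L: "integrable M (\<lambda>\<omega>. (\<Sum>i<Suc N. coef i * Z i \<omega>)\<^sup>2)"
    "(\<integral>\<omega>. (\<Sum>i<Suc N. coef i * Z i \<omega>)\<^sup>2 \<partial>M) \<le> (\<Sum>i<Suc N. \<bar>coef i\<bar> * sqrt (\<integral>\<omega>. (Z i \<omega>)\<^sup>2 \<partial>M))\<^sup>2"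
    using L2_sum_bound[of "{..<Suc N}" Z M coef] Zm Zi by auto
  show "integrable M (\<lambda>\<omega>. (RS B \<psi> t N \<omega>)\<^sup>2)"
    using L(1) Bochner_Integration.integrable_cong[of M M "\<lambda>\<omega>. (RS B \<psi> t N \<omega>)\<^sup>2" "\<lambda>\<omega>. (\<Sum>i<Suc N. coef i * Z i \<omega>)\<^sup>2"] eqRS
    by simp
  have "(\<integral>\<omega>. (RS B \<psi> t N \<omega>)\<^sup>2 \<partial>M) = (\<integral>\<omega>. (\<Sum>i<Suc N. coef i * Z i \<omega>)\<^sup>2 \<partial>M)"
    using eqRS by (intro Bochner_Integration.integral_cong) auto
  also have "\<dots> \<le> (\<Sum>i<Suc N. \<bar>coef i\<bar> * sqrt (\<integral>\<omega>. (Z i \<omega>)\<^sup>2 \<partial>M))\<^sup>2" by (rule L(2))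
  also have "\<dots> \<le> (\<Sum>i<Suc N. \<bar>coef i\<bar> * sqrt (t powr (2 * H)))\<^sup>2"
    using Zv by (intro power_mono sum_mono mult_left_mono sum_nonneg mult_nonneg_nonneg) auto
  also have "(\<Sum>i<Suc N. \<bar>coef i\<bar> * sqrt (t powr (2 * H))) = (\<Sum>i<Suc N. \<bar>coef i\<bar>) * sqrt (t powr (2 * H))"
    by (rule sum_distrib_right[symmetric])
  also have "(\<Sum>i<Suc N. \<bar>coef i\<bar>) \<le> 2"
  proof -
    have d: "\<bar>coef (Suc k)\<bar> = \<psi> (x (Suc k)) - \<psi> (x k)" if "k < N" for k
    proof -
      have "x k \<le> x (Suc k)" unfolding x_def using t by (intro divide_right_mono mult_left_mono) auto
      then have "\<psi> (x k) \<le> \<psi> (x (Suc k))" using that xb[of k] xb[of "Suc k"] by (intro mono) auto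
      then show ?thesis by (simp add: coef_def)
    qed
    have "(\<Sum>i<Suc N. \<bar>coef i\<bar>) = \<bar>coef 0\<bar> + (\<Sum>k<N. \<bar>coef (Suc k)\<bar>)"
      by (rule sum.lessThan_Suc_shift)
    also have "(\<Sum>k<N. \<bar>coef (Suc k)\<bar>) = (\<Sum>k<N. \<psi> (x (Suc k)) - \<psi> (x k))"
      using d by (intro sum.cong) auto
    also have "\<dots> = \<psi> (x N) - \<psi> (x 0)" by (rule sum_lessThan_telescope)
    also have "\<bar>coef 0\<bar> = \<psi> (x N)" using rng[of "x N"] xb[of N] by (simp add: coef_def)
    finally show ?thesis using rng[of "x N"] rng[of "x 0"] xb[of N] xb[of 0] by simp
  qed
  then have "((\<Sum>i<Suc N. \<bar>coef i\<bar>) * sqrt (t powr (2 * H)))\<^sup>2 \<le> (2 * sqrt (t powr (2 * H)))\<^sup>2"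
    by (intro power_mono mult_right_mono sum_nonneg) auto
  also have "(2 * sqrt (t powr (2 * H)))\<^sup>2 = 4 * t powr (2 * H)"
    by (simp add: power_mult_distrib)
  finally show "(\<integral>\<omega>. (RS B \<psi> t N \<omega>)\<^sup>2 \<partial>M) \<le> 4 * t powr (2 * H)" .
qed

definition TT :: "(real \<Rightarrow> real) \<Rightarrow> (real \<Rightarrow> real) \<Rightarrow> real \<Rightarrow> nat \<Rightarrow> real" where
  "TT \<psi> b t N = (\<Sum>k<N. (\<psi> (t * real (Suc k) / real N) - \<psi> (t * real k / real N)) * b (t * real (Suc k) / real N))"

lemma TT_refine:
  assumes t: "0 \<le> t" and N: "N \<ge> 1" and M: "M \<ge> 1"
    and mono: "\<And>x y. 0 \<le> x \<Longrightarrow> x \<le> y \<Longrightarrow> y \<le> t \<Longrightarrow> \<psi> x \<le> \<psi> y"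
    and uc: "\<And>x y. 0 \<le> x \<Longrightarrow> x \<le> t \<Longrightarrow> 0 \<le> y \<Longrightarrow> y \<le> t \<Longrightarrow> \<bar>x - y\<bar> \<le> t / real N \<Longrightarrow> \<bar>b x - b y\<bar> \<le> \<epsilon>"
  shows "\<bar>TT \<psi> b t N - TT \<psi> b t (N * M)\<bar> \<le> \<epsilon> * (\<psi> t - \<psi> 0)"
proof -
  define x where "x k = t * real k / real N" for k
  define y where "y i = t * real i / real (N * M)" for i
  define d where "d i = \<psi> (y (Suc i)) - \<psi> (y i)" for i
  have Npos: "real N > 0" and Mpos: "real M > 0" using N M by auto
  have xy: "x k = y (k * M)" for k using Mpos by (simp add: x_def y_def)
  have yb: "0 \<le> y i" "i \<le> N * M \<Longrightarrow> y i \<le> t" for i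
    using xk_bounds[OF t, of i "N * M"] t by (auto simp: y_def)
  have ymono: "i \<le> j \<Longrightarrow> y i \<le> y j" for i j
    unfolding y_def using t by (intro divide_right_mono mult_left_mono) auto
  have dpos: "0 \<le> d i" if "i < N * M" for i
  proof -
    have "\<psi> (y i) \<le> \<psi> (y (Suc i))" using that yb[of i] yb[of "Suc i"] ymono[of i "Suc i"] by (intro mono) auto
    then show ?thesis by (simp add: d_def)
  qed
  have TN: "TT \<psi> b t (N * M) = (\<Sum>k<N. \<Sum>i\<in>{k * M..<k * M + M}. d i * b (y (Suc i)))"
    unfolding TT_def d_def y_def by (rule sum.nat_group[symmetric])
  have blk: "\<psi> (x (Suc k)) - \<psi> (x k) = (\<Sum>i\<in>{k * M..<k * M + M}. d i)" for k
  proof -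
    have e1: "k * M + M = Suc k * M" by simp
    have "(\<Sum>i\<in>{k * M..<k * M + M}. d i) = \<psi> (y (k * M + M)) - \<psi> (y (k * M))"
      unfolding d_def by (rule sum_Suc_diff') simp
    then show ?thesis by (simp only: e1 xy)
  qed
  have TNN: "TT \<psi> b t N = (\<Sum>k<N. \<Sum>i\<in>{k * M..<k * M + M}. d i * b (x (Suc k)))"
    unfolding TT_def x_def[symmetric] blk by (simp add: sum_distrib_right)
  have "TT \<psi> b t N - TT \<psi> b t (N * M) = (\<Sum>k<N. \<Sum>i\<in>{k * M..<k * M + M}. d i * (b (x (Suc k)) - b (y (Suc i))))"
    unfolding TNN TN by (simp add: sum_subtractf right_diff_distrib)
  also have "\<bar>\<dots>\<bar> \<le> (\<Sum>k<N. \<Sum>i\<in>{k * M..<k * M + M}. d i * \<epsilon>)"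
  proof -
    have "\<bar>d i * (b (x (Suc k)) - b (y (Suc i)))\<bar> \<le> d i * \<epsilon>" if k: "k < N" and i: "i \<in> {k * M..<k * M + M}" for k i
    proof -
      have iNM: "i < N * M"
      proof -
        have "i < k * M + M" using i by simp
        also have "k * M + M = Suc k * M" by simp
        also have "\<dots> \<le> N * M" using k by (intro mult_right_mono) auto
        finally show ?thesis .
      qed
      have le1: "y (Suc i) \<le> x (Suc k)"
        unfolding xy by (intro ymono) (use i in auto)
      have le2: "x k \<le> y (Suc i)"
        unfolding xy by (intro ymono) (use i in auto)
      have xs: "x (Suc k) - x k = t / real N" using Npos by (simp add: x_def field_simps)
      have xb: "x (Suc k) \<le> t" "0 \<le> x (Suc k)" using xk_bounds[OF t, of "Suc k" N] k by (auto simp: x_def)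
      have "\<bar>b (x (Suc k)) - b (y (Suc i))\<bar> \<le> \<epsilon>"
        using le1 le2 xs xb yb[of "Suc i"] by (intro uc) auto
      then show ?thesis using dpos[OF iNM] by (simp add: abs_mult mult_left_mono)
    qed
    then show ?thesis
      by (intro order_trans[OF sum_abs] sum_mono order_trans[OF sum_abs]) auto
  qed
  also have "(\<Sum>k<N. \<Sum>i\<in>{k * M..<k * M + M}. d i * \<epsilon>) = (\<Sum>i<N * M. d i) * \<epsilon>"
    by (simp add: sum.nat_group sum_distrib_right[symmetric])
  also have "(\<Sum>i<N * M. d i) = \<psi> t - \<psi> 0"
  proof -
    have "(\<Sum>i<N * M. d i) = \<psi> (y (N * M)) - \<psi> (y 0)" unfolding d_def by (rule sum_lessThan_telescope)
    moreover have "y (N * M) = t" "y 0 = 0" using Npos Mpos by (auto simp: y_def)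
    ultimately show ?thesis by simp
  qed
  finally show ?thesis by (simp add: mult.commute)
qed

lemma TT_convergent:
  assumes t: "0 \<le> t" and b: "continuous_on {0..t} b"
    and mono: "\<And>x y. 0 \<le> x \<Longrightarrow> x \<le> y \<Longrightarrow> y \<le> t \<Longrightarrow> \<psi> x \<le> \<psi> y"
  shows "convergent (\<lambda>N. TT \<psi> b t N)"
proof -
  define V where "V = \<psi> t - \<psi> 0"
  have V: "0 \<le> V" using mono[of 0 t] t by (simp add: V_def)
  have "Cauchy (\<lambda>N. TT \<psi> b t N)"
  proof (rule CauchyI)
    fix e :: real assume e: "0 < e"
    define \<epsilon> where "\<epsilon> = e / (4 * (V + 1))"
    have \<epsilon>: "0 < \<epsilon>" using e V by (simp add: \<epsilon>_def)
    have "uniformly_continuous_on {0..t} b" using b by (rule compact_uniformly_continuous) simp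
    then obtain \<delta> where \<delta>: "0 < \<delta>" and uc: "\<And>x y. x \<in> {0..t} \<Longrightarrow> y \<in> {0..t} \<Longrightarrow> dist y x < \<delta> \<Longrightarrow> dist (b y) (b x) < \<epsilon>"
      unfolding uniformly_continuous_on_def using \<epsilon> by metis
    obtain N0 :: nat where N0: "t / \<delta> < real N0" using reals_Archimedean2 by blast
    define N1 where "N1 = Suc N0"
    have key: "\<bar>TT \<psi> b t N - TT \<psi> b t (N * M)\<bar> \<le> \<epsilon> * V" if N: "N \<ge> N1" and M: "M \<ge> 1" for N M
      unfolding V_def
    proof (rule TT_refine[where N=N and M=M and \<epsilon>=\<epsilon> and b=b and \<psi>=\<psi> and t=t])
      show "0 \<le> t" by (rule t)
      show "1 \<le> M" by (rule M)
      show "\<psi> x \<le> \<psi> y" if "0 \<le> x" "x \<le> y" "y \<le> t" for x y using that by (rule mono)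
      show "1 \<le> N" using N by (simp add: N1_def)
      have "t / real N < \<delta>"
      proof -
        have Npos: "0 < real N" using N by (simp add: N1_def)
        have "t < real N0 * \<delta>" using N0 \<delta> by (simp add: divide_less_eq)
        also have "\<dots> \<le> real N * \<delta>" using N \<delta> by (intro mult_right_mono) (auto simp: N1_def)
        finally show ?thesis using Npos by (simp add: divide_less_eq mult.commute)
      qed
      then show "\<bar>b x - b y\<bar> \<le> \<epsilon>" if "0 \<le> x" "x \<le> t" "0 \<le> y" "y \<le> t" "\<bar>x - y\<bar> \<le> t / real N" for x y
        using uc[of y x] that by (auto simp: dist_real_def)
    qed
    show "\<exists>M. \<forall>m\<ge>M. \<forall>n\<ge>M. norm (TT \<psi> b t m - TT \<psi> b t n) < e"
    proof (intro exI allI impI)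
      fix m n assume m: "m \<ge> N1" and n: "n \<ge> N1"
      have "\<bar>TT \<psi> b t m - TT \<psi> b t (m * n)\<bar> \<le> \<epsilon> * V" using key[OF m, of n] n by (simp add: N1_def)
      moreover have "\<bar>TT \<psi> b t n - TT \<psi> b t (n * m)\<bar> \<le> \<epsilon> * V" using key[OF n, of m] m by (simp add: N1_def)
      moreover have "\<epsilon> * V < e / 2"
      proof -
        have "\<epsilon> * V = e * V / (4 * (V + 1))" by (simp add: \<epsilon>_def)
        also have "\<dots> < e / 2"
        proof -
          have d: "0 < 4 * (V + 1)" using V by simp
          have "e / 2 * (4 * (V + 1)) = 2 * (e * V) + 2 * e" by (simp add: algebra_simps)
          then have "e * V < e / 2 * (4 * (V + 1))" using e V mult_nonneg_nonneg[of e V] by linarith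
          then show ?thesis using d by (simp add: divide_less_eq)
        qed
        finally show ?thesis .
      qed
      ultimately show "norm (TT \<psi> b t m - TT \<psi> b t n) < e"
        by (simp add: mult.commute[of n m])
    qed
  qed
  then show ?thesis by (simp add: Cauchy_convergent_iff)
qed

lemma RS_convergent:
  assumes t: "0 \<le> t" and b: "continuous_on {0..t} (\<lambda>s. B s \<omega>)"
    and mono: "\<And>x y. 0 \<le> x \<Longrightarrow> x \<le> y \<Longrightarrow> y \<le> t \<Longrightarrow> \<psi> x \<le> \<psi> y"
  shows "convergent (\<lambda>N. RS B \<psi> t N \<omega>)"
proof -
  define b where "b s = B s \<omega>" for s
  have bc: "continuous_on {0..t} b" using b by (simp add: b_def)
  have "convergent (\<lambda>N. TT \<psi> b t N)"
    by (rule TT_convergent[OF t bc]) (rule mono)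
  then obtain L where L: "(\<lambda>N. TT \<psi> b t N) \<longlonglongrightarrow> L"
    by (auto simp: convergent_def)
  have eq: "RS B \<psi> t N \<omega> = \<psi> t * b t - \<psi> 0 * b 0 - TT \<psi> b t N" if "N \<ge> 1" for N
  proof -
    have "RS B \<psi> t N \<omega> = (\<Sum>k<N. \<psi> (t * real k / real N) * (b (t * real (Suc k) / real N) - b (t * real k / real N)))"
      by (simp add: RS_def b_def)
    also have "\<dots> = \<psi> (t * real N / real N) * b (t * real N / real N) - \<psi> (t * real 0 / real N) * b (t * real 0 / real N)
        - TT \<psi> b t N"
      unfolding TT_def by (rule sbp[where p="\<lambda>k. \<psi> (t * real k / real N)" and b="\<lambda>k. b (t * real k / real N)"])
    finally show ?thesis using that by simp
  qed
  have "(\<lambda>N. \<psi> t * b t - \<psi> 0 * b 0 - TT \<psi> b t N) \<longlonglongrightarrow> \<psi> t * b t - \<psi> 0 * b 0 - L"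
    by (intro tendsto_intros L)
  then have "(\<lambda>N. RS B \<psi> t N \<omega>) \<longlonglongrightarrow> \<psi> t * b t - \<psi> 0 * b 0 - L"
    by (rule Lim_transform_eventually) (use eq in \<open>auto simp: eventually_sequentially intro!: exI[of _ 1]\<close>)
  then show ?thesis by (auto simp: convergent_def)
qed

lemma W_bound:
  assumes fBm: "is_fBm M H B" and t: "0 \<le> t" and H: "0 \<le> H"
    and mono: "\<And>x y. 0 \<le> x \<Longrightarrow> x \<le> y \<Longrightarrow> y \<le> t \<Longrightarrow> \<psi> x \<le> \<psi> y"
    and rng: "\<And>x. 0 \<le> x \<Longrightarrow> x \<le> t \<Longrightarrow> 0 \<le> \<psi> x \<and> \<psi> x \<le> 1"
    and conv: "\<And>\<omega>. \<omega> \<in> space M \<Longrightarrow> convergent (\<lambda>N. RS B \<psi> t N \<omega>)"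
  shows "(\<integral>\<^sup>+\<omega>. ennreal ((wiener_integral B \<psi> t \<omega>)\<^sup>2) \<partial>M) \<le> ennreal (4 * t powr (2 * H))"
proof -
  have lim: "(\<lambda>N. ennreal ((RS B \<psi> t N \<omega>)\<^sup>2)) \<longlonglongrightarrow> ennreal ((wiener_integral B \<psi> t \<omega>)\<^sup>2)"
    if w: "\<omega> \<in> space M" for \<omega>
  proof -
    have "(\<lambda>N. RS B \<psi> t N \<omega>) \<longlonglongrightarrow> wiener_integral B \<psi> t \<omega>"
      using conv[OF w] unfolding wiener_RS by (simp add: convergent_LIMSEQ_iff)
    then show ?thesis by (intro tendsto_ennrealI tendsto_power)
  qed
  have meas: "(\<lambda>\<omega>. ennreal ((RS B \<psi> t N \<omega>)\<^sup>2)) \<in> borel_measurable M" for N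
    using RS_meas[OF fBm t, of \<psi> N] by measurable
  have "(\<integral>\<^sup>+\<omega>. ennreal ((wiener_integral B \<psi> t \<omega>)\<^sup>2) \<partial>M) = (\<integral>\<^sup>+\<omega>. liminf (\<lambda>N. ennreal ((RS B \<psi> t N \<omega>)\<^sup>2)) \<partial>M)"
    by (intro nn_integral_cong) (simp add: lim_imp_Liminf[OF trivial_limit_sequentially lim])
  also have "\<dots> \<le> liminf (\<lambda>N. \<integral>\<^sup>+\<omega>. ennreal ((RS B \<psi> t N \<omega>)\<^sup>2) \<partial>M)"
    by (rule nn_integral_liminf) (rule meas)
  also have "\<dots> \<le> limsup (\<lambda>N. \<integral>\<^sup>+\<omega>. ennreal ((RS B \<psi> t N \<omega>)\<^sup>2) \<partial>M)"
    by (rule Liminf_le_Limsup) simp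
  also have "\<dots> \<le> ennreal (4 * t powr (2 * H))"
  proof (rule Limsup_bounded, rule always_eventually, rule allI)
    fix N
    have "(\<integral>\<^sup>+\<omega>. ennreal ((RS B \<psi> t N \<omega>)\<^sup>2) \<partial>M) = ennreal (\<integral>\<omega>. (RS B \<psi> t N \<omega>)\<^sup>2 \<partial>M)"
      by (rule nn_integral_eq_integral) (use RS_bound(1)[OF fBm t H mono rng] in auto)
    also have "\<dots> \<le> ennreal (4 * t powr (2 * H))"
      by (rule ennreal_leI) (rule RS_bound(2)[OF fBm t H mono rng])
    finally show "(\<integral>\<^sup>+\<omega>. ennreal ((RS B \<psi> t N \<omega>)\<^sup>2) \<partial>M) \<le> ennreal (4 * t powr (2 * H))" .
  qed
  finally show ?thesis .
qed

lemma floor_approx: "(\<lambda>m. real_of_int \<lfloor>s * real (Suc m)\<rfloor> / real (Suc m)) \<longlonglongrightarrow> s"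
proof (rule tendsto_sandwich[where f="\<lambda>m. s - 1 / real (Suc m)" and h="\<lambda>m. s"])
  show "\<forall>\<^sub>F m in sequentially. s - 1 / real (Suc m) \<le> real_of_int \<lfloor>s * real (Suc m)\<rfloor> / real (Suc m)"
  proof (rule always_eventually, rule allI)
    fix m
    have "s * real (Suc m) - 1 \<le> real_of_int \<lfloor>s * real (Suc m)\<rfloor>" by linarith
    then have "(s * real (Suc m) - 1) / real (Suc m) \<le> real_of_int \<lfloor>s * real (Suc m)\<rfloor> / real (Suc m)"
      by (intro divide_right_mono) auto
    moreover have "(s * real (Suc m) - 1) / real (Suc m) = s - 1 / real (Suc m)"
      by (simp add: field_simps del: of_nat_Suc)
    ultimately show "s - 1 / real (Suc m) \<le> real_of_int \<lfloor>s * real (Suc m)\<rfloor> / real (Suc m)" by simp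
  qed
  show "\<forall>\<^sub>F m in sequentially. real_of_int \<lfloor>s * real (Suc m)\<rfloor> / real (Suc m) \<le> s"
  proof (rule always_eventually, rule allI)
    fix m
    have "real_of_int \<lfloor>s * real (Suc m)\<rfloor> \<le> s * real (Suc m)" by linarith
    then show "real_of_int \<lfloor>s * real (Suc m)\<rfloor> / real (Suc m) \<le> s"
      by (simp add: divide_le_eq del: of_nat_Suc)
  qed
  have "(\<lambda>m. 1 / real (Suc m)) \<longlonglongrightarrow> 0" by (rule LIMSEQ_Suc[OF lim_const_over_n])
  then show "(\<lambda>m. s - 1 / real (Suc m)) \<longlonglongrightarrow> s" using tendsto_diff[OF tendsto_const, of _ 0 sequentially s] by simp
qed simp

lemma caratheodory:
  fixes F :: "real \<Rightarrow> 'a \<Rightarrow> real"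
  assumes cont: "\<And>\<omega>. \<omega> \<in> space M \<Longrightarrow> continuous_on UNIV (\<lambda>s. F s \<omega>)"
    and meas: "\<And>s. F s \<in> borel_measurable M"
  shows "(\<lambda>x. F (fst x) (snd x)) \<in> borel_measurable (lborel \<Otimes>\<^sub>M M)"
proof (rule borel_measurable_LIMSEQ_metric)
  fix m :: nat
  show "(\<lambda>x. F (real_of_int \<lfloor>fst x * real (Suc m)\<rfloor> / real (Suc m)) (snd x)) \<in> borel_measurable (lborel \<Otimes>\<^sub>M M)"
  proof (rule measurable_compose_countable'[where f="\<lambda>i x. F (real_of_int i / real (Suc m)) (snd x)" and I=UNIV])
    show "(\<lambda>x. F (real_of_int i / real (Suc m)) (snd x)) \<in> borel_measurable (lborel \<Otimes>\<^sub>M M)" for i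
      by (rule measurable_compose[OF measurable_snd meas])
    show "(\<lambda>x. \<lfloor>fst x * real (Suc m)\<rfloor>) \<in> lborel \<Otimes>\<^sub>M M \<rightarrow>\<^sub>M count_space UNIV"
      by (rule measurable_compose[OF _ measurable_real_floor]) measurable
  qed simp
next
  fix x :: "real \<times> 'a" assume x: "x \<in> space (lborel \<Otimes>\<^sub>M M)"
  then have w: "snd x \<in> space M" by (auto simp: space_pair_measure)
  have "isCont (\<lambda>s. F s (snd x)) (fst x)"
    using cont[OF w] by (simp add: continuous_on_eq_continuous_at)
  then show "(\<lambda>m. F (real_of_int \<lfloor>fst x * real (Suc m)\<rfloor> / real (Suc m)) (snd x)) \<longlonglongrightarrow> F (fst x) (snd x)"
    by (rule isCont_tendsto_compose) (rule floor_approx)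
qed

lemma kint_meas:
  fixes A :: "real \<Rightarrow> real"
  assumes [measurable]: "A \<in> borel_measurable borel"
  shows "(\<lambda>t. \<integral>s. indicator {c * t..t} s *\<^sub>R A s \<partial>lborel) \<in> borel_measurable lborel"
proof -
  have eq: "case_prod (\<lambda>t s. indicator {c * t..t} s *\<^sub>R A s) = (\<lambda>x. if c * fst x \<le> snd x \<and> snd x \<le> fst x then A (snd x) else 0)"
    by (auto simp: fun_eq_iff indicator_def)
  have "case_prod (\<lambda>t s. indicator {c * t..t} s *\<^sub>R A s) \<in> borel_measurable (lborel \<Otimes>\<^sub>M lborel)"
    unfolding eq by measurable
  then show ?thesis by (rule lborel.borel_measurable_lebesgue_integral)
qed

lemma fBm_cont: "is_fBm M H B \<Longrightarrow> \<omega> \<in> space M \<Longrightarrow> continuous_on {0..} (\<lambda>t. B t \<omega>)"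
  by (simp add: is_fBm_def)

lemma Wmeas:
  fixes a :: "real \<Rightarrow> real" and B :: "real \<Rightarrow> 'w \<Rightarrow> real"
  assumes a: "\<forall>t\<in>{0..T}. a0 \<le> a t \<and> a t \<le> a1" and a0: "0 < a0"
    and am: "set_borel_measurable lborel {0..T} a"
    and fBm: "is_fBm M H B"
  shows "(\<lambda>x. indicator {0..T} (fst x) * wiener_integral B (kern R0 a n (fst x)) (fst x) (snd x))
           \<in> borel_measurable (lborel \<Otimes>\<^sub>M M)"
proof -
  define A where "A s = indicator {0..T} s *\<^sub>R a s" for s
  have Am[measurable]: "A \<in> borel_measurable borel"
    using am unfolding set_borel_measurable_def A_def by simp
  define Bc where "Bc s \<omega> = B (max 0 (min T s)) \<omega>" for s \<omega>
  have Bcm: "(\<lambda>x. Bc (fst x) (snd x)) \<in> borel_measurable (lborel \<Otimes>\<^sub>M M)"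
  proof (rule caratheodory)
    fix \<omega> assume w: "\<omega> \<in> space M"
    have c: "continuous_on {0..} (\<lambda>s. B s \<omega>)" using fBm_cont[OF fBm w] .
    show "continuous_on UNIV (\<lambda>s. Bc s \<omega>)"
      unfolding Bc_def by (rule continuous_on_compose2[OF c]) (auto intro!: continuous_intros)
  next
    fix s show "Bc s \<in> borel_measurable M"
      unfolding Bc_def by (rule fBm_meas[OF fBm]) simp
  qed
  have Bcc: "(\<lambda>x. Bc (fst x * c) (snd x)) \<in> borel_measurable (lborel \<Otimes>\<^sub>M M)" for c
  proof -
    have "(\<lambda>x. (fst x * c, snd x)) \<in> (lborel \<Otimes>\<^sub>M M) \<rightarrow>\<^sub>M (lborel \<Otimes>\<^sub>M M)"
      by measurable
    from measurable_compose[OF this Bcm] show ?thesis by simp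
  qed
  define K where "K k N t = exp (- lam R0 n * (\<integral>s. indicator {(real k / real N) * t..t} s *\<^sub>R A s \<partial>lborel))" for k N t
  have Km: "(\<lambda>x. K k N (fst x)) \<in> borel_measurable (lborel \<Otimes>\<^sub>M M)" for k N
  proof -
    have "(\<lambda>t. K k N t) \<in> borel_measurable lborel"
      unfolding K_def using kint_meas[OF Am, of "real k / real N"] by measurable
    then show ?thesis by (rule measurable_compose[OF measurable_fst])
  qed
  define G where "G N x = indicator {0..T} (fst x) * (\<Sum>k<N. K k N (fst x) *
      (Bc (fst x * (real (Suc k) / real N)) (snd x) - Bc (fst x * (real k / real N)) (snd x)))" for N x
  have Gm: "G N \<in> borel_measurable (lborel \<Otimes>\<^sub>M M)" for N
  proof -
    have ind: "(\<lambda>x. indicator {0..T} (fst x) :: real) \<in> borel_measurable (lborel \<Otimes>\<^sub>M M)"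
      by (rule measurable_compose[OF measurable_fst]) simp
    show ?thesis
      unfolding G_def
      by (intro borel_measurable_times[OF ind] borel_measurable_sum borel_measurable_times Km borel_measurable_diff Bcc)
  qed
  have Geq: "G N x = indicator {0..T} (fst x) * RS B (kern R0 a n (fst x)) (fst x) N (snd x)" for N x
  proof (cases "fst x \<in> {0..T}")
    case False then show ?thesis by (simp add: G_def)
  next
    case True
    define t where "t = fst x"
    have t: "0 \<le> t" "t \<le> T" using True by (auto simp: t_def)
    have pts: "0 \<le> t * real j / real N" "t * real j / real N \<le> T" if "j \<le> N" for j
      using xk_bounds[OF t(1) that] t by auto
    have Keq: "K k N t = kern R0 a n t (t * real k / real N)" if k: "k < N" for k
    proof -
      have "(\<integral>s. indicator {(real k / real N) * t..t} s *\<^sub>R A s \<partial>lborel) = (LBINT s:{t * real k / real N..t}. a s)"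
        unfolding set_lebesgue_integral_def
      proof (intro Bochner_Integration.integral_cong refl)
        fix s
        have e: "(real k / real N) * t = t * real k / real N" by simp
        have p0: "0 \<le> t * real k / real N" using pts(1)[of k] k by simp
        show "indicator {(real k / real N) * t..t} s *\<^sub>R A s = indicator {t * real k / real N..t} s *\<^sub>R a s"
          unfolding e using p0 t by (auto simp: indicator_def A_def dest: order_trans[OF p0])
      qed
      then show ?thesis by (simp add: K_def kern_def)
    qed
    have Bceq: "Bc (t * real j / real N) \<omega> = B (t * real j / real N) \<omega>" if "j \<le> N" for j \<omega>
      using pts[OF that] by (simp add: Bc_def)
    have "(\<Sum>k<N. K k N t * (Bc (t * (real (Suc k) / real N)) (snd x) - Bc (t * (real k / real N)) (snd x)))
        = RS B (kern R0 a n t) t N (snd x)"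
      unfolding RS_def
    proof (intro sum.cong refl)
      fix k assume k: "k \<in> {..<N}"
      have e1: "t * (real (Suc k) / real N) = t * real (Suc k) / real N" by simp
      have e2: "t * (real k / real N) = t * real k / real N" by simp
      have kk: "k < N" "Suc k \<le> N" "k \<le> N" using k by auto
      show "K k N t * (Bc (t * (real (Suc k) / real N)) (snd x) - Bc (t * (real k / real N)) (snd x)) =
          kern R0 a n t (t * real k / real N) * (B (t * real (Suc k) / real N) (snd x) - B (t * real k / real N) (snd x))"
        unfolding e1 e2 Keq[OF kk(1)] Bceq[OF kk(2)] Bceq[OF kk(3)] ..
    qed
    then show ?thesis using True by (simp add: G_def t_def)
  qed
  show ?thesis
  proof (rule borel_measurable_LIMSEQ_metric[OF Gm])
    fix x :: "real \<times> 'w" assume x: "x \<in> space (lborel \<Otimes>\<^sub>M M)"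
    then have w: "snd x \<in> space M" by (auto simp: space_pair_measure)
    have "(\<lambda>N. indicator {0..T} (fst x) * RS B (kern R0 a n (fst x)) (fst x) N (snd x)) \<longlonglongrightarrow>
        indicator {0..T} (fst x) * wiener_integral B (kern R0 a n (fst x)) (fst x) (snd x)"
    proof (cases "fst x \<in> {0..T}")
      case False then show ?thesis by simp
    next
      case True
      define t where "t = fst x"
      have t: "0 \<le> t" "t \<le> T" using True by (auto simp: t_def)
      have c: "continuous_on {0..t} (\<lambda>s. B s (snd x))"
        by (rule continuous_on_subset[OF fBm_cont[OF fBm w]]) auto
      have "convergent (\<lambda>N. RS B (kern R0 a n t) t N (snd x))"
        by (rule RS_convergent[where B=B and \<omega>="snd x", OF t(1) c]) (rule kern_props(3)[OF a a0 am t(2)])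
      then have "(\<lambda>N. RS B (kern R0 a n t) t N (snd x)) \<longlonglongrightarrow> wiener_integral B (kern R0 a n t) t (snd x)"
        by (simp add: convergent_LIMSEQ_iff wiener_RS)
      then show ?thesis unfolding t_def by (intro tendsto_mult_left)
    qed
    then show "(\<lambda>N. G N x) \<longlonglongrightarrow> indicator {0..T} (fst x) * wiener_integral B (kern R0 a n (fst x)) (fst x) (snd x)"
      by (simp add: Geq)
  qed
qed

lemma esssup_bound:
  fixes h :: "real \<Rightarrow> real"
  assumes hm: "set_borel_measurable lborel {0<..<T} h"
    and hK: "\<exists>K. AE t in lborel. t \<in> {0<..<T} \<longrightarrow> \<bar>h t\<bar> \<le> K"
  shows "AE t in lborel. t \<in> {0<..<T} \<longrightarrow> \<bar>h t\<bar> \<le> \<bar>real_of_ereal (esssup (restrict_space lborel {0<..<T}) (\<lambda>t. ereal \<bar>h t\<bar>))\<bar>"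
proof -
  define Es where "Es = esssup (restrict_space lborel {0<..<T}) (\<lambda>t. ereal \<bar>h t\<bar>)"
  have sets: "{0<..<T} \<inter> space lborel \<in> sets lborel" by simp
  have hr: "h \<in> borel_measurable (restrict_space lborel {0<..<T})"
    using hm unfolding set_borel_measurable_def by (subst borel_measurable_restrict_space_iff[OF sets])
  then have hr': "(\<lambda>t. ereal \<bar>h t\<bar>) \<in> borel_measurable (restrict_space lborel {0<..<T})" by measurable
  obtain K where K: "AE t in lborel. t \<in> {0<..<T} \<longrightarrow> \<bar>h t\<bar> \<le> K" using hK by blast
  have "AE t in restrict_space lborel {0<..<T}. ereal \<bar>h t\<bar> \<le> ereal K"
    using K by (subst AE_restrict_space_iff[OF sets]) auto
  then have EsK: "Es \<le> ereal K" unfolding Es_def by (rule esssup_I[OF hr'])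
  have "AE t in restrict_space lborel {0<..<T}. ereal \<bar>h t\<bar> \<le> Es" unfolding Es_def by (rule esssup_AE)
  then have ae: "AE t in lborel. t \<in> {0<..<T} \<longrightarrow> ereal \<bar>h t\<bar> \<le> Es"
    by (subst (asm) AE_restrict_space_iff[OF sets])
  show ?thesis unfolding Es_def[symmetric]
  proof (rule AE_mp[OF ae], intro AE_I2 impI)
    fix t assume h1: "t \<in> {0<..<T} \<longrightarrow> ereal \<bar>h t\<bar> \<le> Es" and t: "t \<in> {0<..<T}"
    then have le: "ereal \<bar>h t\<bar> \<le> Es" by simp
    show "\<bar>h t\<bar> \<le> \<bar>real_of_ereal Es\<bar>"
    proof (cases Es)
      case (real e)
      then show ?thesis using le by simp
    next
      case PInf then show ?thesis using EsK by simp
    next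
      case MInf then show ?thesis using le by simp
    qed
  qed
qed

lemma D_bound:
  fixes a h :: "real \<Rightarrow> real"
  assumes a: "\<forall>t\<in>{0..T}. a0 \<le> a t \<and> a t \<le> a1" and a0: "0 < a0"
    and am: "set_borel_measurable lborel {0..T} a"
    and E1: "AE t in lborel. t \<in> {0<..<T} \<longrightarrow> \<bar>h t\<bar> \<le> Eb" and Eb: "0 \<le> Eb"
    and t: "0 \<le> t" "t \<le> T"
  shows "\<bar>LBINT \<tau>:{0..t}. h \<tau> * kern R0 a n t \<tau>\<bar> \<le> t * Eb"
proof -
  define F where "F \<tau> = indicator {0..t} \<tau> *\<^sub>R (h \<tau> * kern R0 a n t \<tau>)" for \<tau>
  have "\<bar>LBINT \<tau>:{0..t}. h \<tau> * kern R0 a n t \<tau>\<bar> = norm (\<integral>\<tau>. F \<tau> \<partial>lborel)"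
    by (simp add: set_lebesgue_integral_def F_def)
  also have "\<dots> \<le> (\<integral>\<tau>. norm (F \<tau>) \<partial>lborel)" by (rule integral_norm_bound)
  also have "\<dots> \<le> (\<integral>\<tau>. Eb * indicator {0..t} \<tau> \<partial>lborel)"
  proof (cases "integrable lborel (\<lambda>\<tau>. norm (F \<tau>))")
    case True
    show ?thesis
    proof (rule integral_mono_AE[OF True])
      show "integrable lborel (\<lambda>\<tau>. Eb * indicator {0..t} \<tau> :: real)"
        by (intro integrable_mult_right integrable_real_indicator) (auto simp: emeasure_lborel_Icc_eq)
      show "AE \<tau> in lborel. norm (F \<tau>) \<le> Eb * indicator {0..t} \<tau>"
      proof (rule AE_mp[OF AE_conjI[OF E1 AE_conjI[OF AE_lborel_singleton[of 0] AE_lborel_singleton[of T]]]], intro AE_I2 impI)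
        fix \<tau> assume h: "(\<tau> \<in> {0<..<T} \<longrightarrow> \<bar>h \<tau>\<bar> \<le> Eb) \<and> \<tau> \<noteq> 0 \<and> \<tau> \<noteq> T"
        show "norm (F \<tau>) \<le> Eb * indicator {0..t} \<tau>"
        proof (cases "\<tau> \<in> {0..t}")
          case True
          then have "\<tau> \<in> {0<..<T}" using h t by auto
          then have hb: "\<bar>h \<tau>\<bar> \<le> Eb" using h by auto
          have "0 < kern R0 a n t \<tau>" "kern R0 a n t \<tau> \<le> 1"
            using kern_props(1,2)[OF a a0 am t(2)] True by auto
          then have "\<bar>h \<tau> * kern R0 a n t \<tau>\<bar> \<le> Eb * 1"
            unfolding abs_mult using hb Eb by (intro mult_mono) auto
          then show ?thesis using True by (simp add: F_def)
        qed (simp add: F_def)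
      qed
    qed
  next
    case False
    then have "(\<integral>\<tau>. norm (F \<tau>) \<partial>lborel) = 0" by (rule not_integrable_integral_eq)
    moreover have "0 \<le> (\<integral>\<tau>. Eb * indicator {0..t} \<tau> \<partial>lborel)"
      using Eb by (intro Bochner_Integration.integral_nonneg_AE AE_I2) simp
    ultimately show ?thesis by simp
  qed
  also have "\<dots> = Eb * t" using t by simp
  finally show ?thesis by (simp add: mult.commute)
qed

lemma suminf_bessel:
  assumes R0: "R0 > 0"
    and i2: "set_integrable lborel {0..R0} (\<lambda>r. r\<^sup>2 * (\<phi> r)\<^sup>2)"
    and m: "set_borel_measurable lborel {0..R0} \<phi>"
  shows "(\<Sum>n. ennreal ((coeff R0 \<phi> n)\<^sup>2)) \<le> ennreal (wnorm2 R0 \<phi>)"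
proof (rule suminf_le_const)
  show "summable (\<lambda>n. ennreal ((coeff R0 \<phi> n)\<^sup>2))" by simp
  fix K
  have "(\<Sum>n<K. (coeff R0 \<phi> n)\<^sup>2) = (\<Sum>n\<in>{..<K} - {0}. (coeff R0 \<phi> n)\<^sup>2)"
    by (rule sum.mono_neutral_right) (auto simp: coeff_zero)
  also have "\<dots> \<le> (\<Sum>n\<in>{1..K}. (coeff R0 \<phi> n)\<^sup>2)"
    by (rule sum_mono2) auto
  also have "\<dots> \<le> wnorm2 R0 \<phi>" by (rule bessel[OF R0 i2 m])
  finally have "(\<Sum>n<K. (coeff R0 \<phi> n)\<^sup>2) \<le> wnorm2 R0 \<phi>" .
  then show "(\<Sum>n<K. ennreal ((coeff R0 \<phi> n)\<^sup>2)) \<le> ennreal (wnorm2 R0 \<phi>)"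
    by (simp add: ennreal_leI)
qed

theorem theorem3p1:
  fixes R0 T H a0 a1 :: real and a :: "real \<Rightarrow> real"
    and M :: "'w measure" and B :: "real \<Rightarrow> 'w \<Rightarrow> real"
  assumes "R0 > 0" and "T > 0"
    and "0 < a0" and "\<forall>t\<in>{0..T}. a0 \<le> a t \<and> a t \<le> a1"
    and "set_borel_measurable lborel {0..T} a"
    and "0 < H" and "H < 1"
    and "prob_space M" and "complete_measure M"
    and "is_fBm M H B"
  shows "\<exists>C>0. \<forall>(f :: real \<Rightarrow> real) (g :: real \<Rightarrow> real) (h :: real \<Rightarrow> real)
             (u :: real \<Rightarrow> real \<Rightarrow> 'w \<Rightarrow> real).
     set_integrable lborel {0..R0} (\<lambda>r. r\<^sup>2 * (f r)\<^sup>2) \<longrightarrow>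
     set_integrable lborel {0..R0} (\<lambda>r. r\<^sup>2 * (g r)\<^sup>2) \<longrightarrow>
     set_borel_measurable lborel {0..R0} f \<longrightarrow>
     set_borel_measurable lborel {0..R0} g \<longrightarrow>
     wnorm2 R0 g \<noteq> 0 \<longrightarrow>
     set_borel_measurable lborel {0<..<T} h \<longrightarrow>
     (\<exists>K. AE t in lborel. t \<in> {0<..<T} \<longrightarrow> \<bar>h t\<bar> \<le> K) \<longrightarrow>
     (\<exists>ch>0. AE t in lborel. t \<in> {0<..<T} \<longrightarrow> ch \<le> h t) \<longrightarrow>
     is_mild_solution M R0 T a B f g h u \<longrightarrow>
     (\<integral>\<^sup>+ \<omega>. (\<integral>\<^sup>+ t\<in>{0..T}. (\<integral>\<^sup>+ r\<in>{0..R0}. ennreal (r\<^sup>2 * (u r t \<omega>)\<^sup>2) \<partial>lborel) \<partial>lborel) \<partial>M)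
       \<le> ennreal (C * (T ^ 3 * wnorm2 R0 f *
              (real_of_ereal (esssup (restrict_space lborel {0<..<T}) (\<lambda>t. ereal \<bar>h t\<bar>)))\<^sup>2
            + T powr (2 * H + 1) / (2 * H + 1) * wnorm2 R0 g))"
proof -
  note R0 = assms(1) and T = assms(2) and a0 = assms(3) and a = assms(4) and am = assms(5)
    and H0 = assms(6) and H1 = assms(7) and P = assms(8) and fBm = assms(10)
  interpret prob_space M by (rule P)
  interpret pls: pair_sigma_finite lborel M
    unfolding pair_sigma_finite_def using prob_space_imp_sigma_finite[OF P] lborel.sigma_finite_measure_axioms by simp
  have H: "0 \<le> H" using H0 by simp
  show ?thesis
  proof (intro exI[of _ "48::real"] conjI allI impI)
    show "(0::real) < 48" by simp
    fix f g h :: "real \<Rightarrow> real" and u :: "real \<Rightarrow> real \<Rightarrow> 'w \<Rightarrow> real"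
    assume fi: "set_integrable lborel {0..R0} (\<lambda>r. r\<^sup>2 * (f r)\<^sup>2)"
      and gi: "set_integrable lborel {0..R0} (\<lambda>r. r\<^sup>2 * (g r)\<^sup>2)"
      and fm: "set_borel_measurable lborel {0..R0} f"
      and gm: "set_borel_measurable lborel {0..R0} g"
      and gnz: "wnorm2 R0 g \<noteq> 0"
      and hm: "set_borel_measurable lborel {0<..<T} h"
      and hK: "\<exists>K. AE t in lborel. t \<in> {0<..<T} \<longrightarrow> \<bar>h t\<bar> \<le> K"
      and hch: "\<exists>ch>0. AE t in lborel. t \<in> {0<..<T} \<longrightarrow> ch \<le> h t"
      and mild: "is_mild_solution M R0 T a B f g h u"
    define Eb where "Eb = \<bar>real_of_ereal (esssup (restrict_space lborel {0<..<T}) (\<lambda>t. ereal \<bar>h t\<bar>))\<bar>"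
    define nf where "nf = wnorm2 R0 f"
    define ng where "ng = wnorm2 R0 g"
    define W where "W n t \<omega> = wiener_integral B (kern R0 a n t) t \<omega>" for n t \<omega>
    define W' where "W' n x = indicator {0..T} (fst x) * W n (fst x) (snd x)" for n and x :: "real \<times> 'w"
    define PP where "PP = ennreal (4 * (T * Eb)\<^sup>2 * nf)"
    define Q where "Q x = (\<Sum>n. ennreal (4 * (coeff R0 g n)\<^sup>2 * (W' n x)\<^sup>2))" for x :: "real \<times> 'w"
    have E1: "AE t in lborel. t \<in> {0<..<T} \<longrightarrow> \<bar>h t\<bar> \<le> Eb"
      unfolding Eb_def by (rule esssup_bound[OF hm hK])
    have Eb0: "0 \<le> Eb" unfolding Eb_def by (rule abs_ge_zero)
    have nf0: "0 \<le> nf" unfolding nf_def wnorm2_def set_lebesgue_integral_def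
      by (intro Bochner_Integration.integral_nonneg_AE AE_I2) simp
    have ng0: "0 \<le> ng" unfolding ng_def wnorm2_def set_lebesgue_integral_def
      by (intro Bochner_Integration.integral_nonneg_AE AE_I2) simp
    have Wm[measurable]: "W' n \<in> borel_measurable (lborel \<Otimes>\<^sub>M M)" for n
      unfolding W'_def W_def by (rule Wmeas[OF a a0 am fBm])
    have Qm[measurable]: "Q \<in> borel_measurable (lborel \<Otimes>\<^sub>M M)"
      unfolding Q_def by measurable
    have fn_bnd: "(\<Sum>n. ennreal ((coeff R0 f n)\<^sup>2)) \<le> ennreal nf"
      unfolding nf_def by (rule suminf_bessel[OF R0 fi fm])
    have gn_bnd: "(\<Sum>n. ennreal ((coeff R0 g n)\<^sup>2)) \<le> ennreal ng"
      unfolding ng_def by (rule suminf_bessel[OF R0 gi gm])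
    have pw: "(\<integral>\<^sup>+ r\<in>{0..R0}. ennreal (r\<^sup>2 * (u r t \<omega>)\<^sup>2) \<partial>lborel) \<le> PP + Q (t, \<omega>)"
      if t: "t \<in> {0..T}" and w: "\<omega> \<in> space M" for t \<omega>
    proof -
      have um: "(\<lambda>r. u r t \<omega>) \<in> borel_measurable lborel"
        and lim: "(\<lambda>N. \<integral>\<^sup>+ r\<in>{0..R0}. ennreal (r\<^sup>2 * (u r t \<omega> -
             (\<Sum>n=1..N. mild_coeff R0 a B f g h n t \<omega> * omega R0 n r))\<^sup>2) \<partial>lborel) \<longlonglongrightarrow> 0"
        using mild t w unfolding is_mild_solution_def by auto
      define c where "c n = mild_coeff R0 a B f g h n t \<omega>" for n
      have "(\<integral>\<^sup>+ r\<in>{0..R0}. ennreal (r\<^sup>2 * (u r t \<omega>)\<^sup>2) \<partial>lborel) \<le> 2 * (\<Sum>n. ennreal ((c n)\<^sup>2))"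
        unfolding c_def by (rule L2bound[OF R0 um lim])
      also have "\<dots> = (\<Sum>n. 2 * ennreal ((c n)\<^sup>2))" by simp
      also have "\<dots> \<le> (\<Sum>n. ennreal (4 * (T * Eb)\<^sup>2 * (coeff R0 f n)\<^sup>2) + ennreal (4 * (coeff R0 g n)\<^sup>2 * (W' n (t, \<omega>))\<^sup>2))"
      proof (rule suminf_le)
        fix n
        define D where "D = (LBINT \<tau>:{0..t}. h \<tau> * kern R0 a n t \<tau>)"
        have cn: "c n = coeff R0 f n * D + coeff R0 g n * W' n (t, \<omega>)"
          using t by (simp add: c_def mild_coeff_def D_def W'_def W_def)
        have Db: "\<bar>D\<bar> \<le> t * Eb" unfolding D_def
          using t by (intro D_bound[OF a a0 am E1 Eb0]) auto
        also have "\<dots> \<le> T * Eb" using t Eb0 by (intro mult_right_mono) auto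
        finally have D2: "D\<^sup>2 \<le> (T * Eb)\<^sup>2" using power_mono[of "\<bar>D\<bar>" "T * Eb" 2] by simp
        have "(coeff R0 f n * D)\<^sup>2 = (coeff R0 f n)\<^sup>2 * D\<^sup>2" by (simp add: power_mult_distrib)
        also have "\<dots> \<le> (coeff R0 f n)\<^sup>2 * (T * Eb)\<^sup>2" by (rule mult_left_mono[OF D2]) simp
        finally have fD: "(coeff R0 f n * D)\<^sup>2 \<le> (T * Eb)\<^sup>2 * (coeff R0 f n)\<^sup>2" by (simp only: mult.commute)
        have "2 * (c n)\<^sup>2 \<le> 4 * (coeff R0 f n * D)\<^sup>2 + 4 * (coeff R0 g n * W' n (t, \<omega>))\<^sup>2"
          unfolding cn using sq_split[of "coeff R0 f n * D + coeff R0 g n * W' n (t, \<omega>)" "coeff R0 g n * W' n (t, \<omega>)"] by simp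
        also have "\<dots> \<le> 4 * (T * Eb)\<^sup>2 * (coeff R0 f n)\<^sup>2 + 4 * (coeff R0 g n)\<^sup>2 * (W' n (t, \<omega>))\<^sup>2"
          using fD by (simp add: power_mult_distrib)
        finally have r: "2 * (c n)\<^sup>2 \<le> 4 * (T * Eb)\<^sup>2 * (coeff R0 f n)\<^sup>2 + 4 * (coeff R0 g n)\<^sup>2 * (W' n (t, \<omega>))\<^sup>2" .
        have "2 * ennreal ((c n)\<^sup>2) = ennreal (2 * (c n)\<^sup>2)" by (simp add: ennreal_mult)
        also have "\<dots> \<le> ennreal (4 * (T * Eb)\<^sup>2 * (coeff R0 f n)\<^sup>2 + 4 * (coeff R0 g n)\<^sup>2 * (W' n (t, \<omega>))\<^sup>2)"
          by (rule ennreal_leI[OF r])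
        also have "\<dots> = ennreal (4 * (T * Eb)\<^sup>2 * (coeff R0 f n)\<^sup>2) + ennreal (4 * (coeff R0 g n)\<^sup>2 * (W' n (t, \<omega>))\<^sup>2)"
          by (rule ennreal_plus) auto
        finally show "2 * ennreal ((c n)\<^sup>2) \<le> ennreal (4 * (T * Eb)\<^sup>2 * (coeff R0 f n)\<^sup>2) + ennreal (4 * (coeff R0 g n)\<^sup>2 * (W' n (t, \<omega>))\<^sup>2)" .
      qed auto
      also have "\<dots> = (\<Sum>n. ennreal (4 * (T * Eb)\<^sup>2 * (coeff R0 f n)\<^sup>2)) + Q (t, \<omega>)"
        unfolding Q_def by (rule suminf_add[symmetric]) auto
      also have "(\<Sum>n. ennreal (4 * (T * Eb)\<^sup>2 * (coeff R0 f n)\<^sup>2)) = ennreal (4 * (T * Eb)\<^sup>2) * (\<Sum>n. ennreal ((coeff R0 f n)\<^sup>2))"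
        by (simp add: ennreal_mult)
      also have "\<dots> \<le> ennreal (4 * (T * Eb)\<^sup>2) * ennreal nf"
        by (rule mult_left_mono[OF fn_bnd]) simp
      also have "\<dots> = PP" unfolding PP_def using nf0 by (simp add: ennreal_mult)
      finally show ?thesis by (simp add: add_right_mono)
    qed
    define R where "R = ennreal (16 * T powr (2 * H) * ng)"
    have inner: "(\<integral>\<^sup>+\<omega>. (PP + Q (t, \<omega>)) * indicator {0..T} t \<partial>M) \<le> (PP + R) * indicator {0..T} t" for t
    proof (cases "t \<in> {0..T}")
      case False then show ?thesis by simp
    next
      case True
      then have t0: "0 \<le> t" and tT: "t \<le> T" by auto
      have Qt: "(\<lambda>\<omega>. Q (t, \<omega>)) \<in> borel_measurable M" using measurable_Pair2[OF Qm, of t] by simp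
      have Wt: "(\<lambda>\<omega>. W n t \<omega>) \<in> borel_measurable M" for n
      proof -
        have "(\<lambda>\<omega>. W' n (t, \<omega>)) \<in> borel_measurable M" using measurable_Pair2[OF Wm[of n], of t] by simp
        then show ?thesis using True by (simp add: W'_def)
      qed
      have W'm: "(\<lambda>\<omega>. ennreal (4 * (coeff R0 g n)\<^sup>2 * (W' n (t, \<omega>))\<^sup>2)) \<in> borel_measurable M" for n
      proof -
        have [measurable]: "(\<lambda>\<omega>. W' n (t, \<omega>)) \<in> borel_measurable M" using measurable_Pair2[OF Wm[of n], of t] by simp
        show ?thesis by measurable
      qed
      have Qb: "(\<integral>\<^sup>+\<omega>. Q (t, \<omega>) \<partial>M) \<le> R"
      proof -
        have "(\<integral>\<^sup>+\<omega>. Q (t, \<omega>) \<partial>M) = (\<Sum>n. \<integral>\<^sup>+\<omega>. ennreal (4 * (coeff R0 g n)\<^sup>2 * (W' n (t, \<omega>))\<^sup>2) \<partial>M)"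
          unfolding Q_def by (rule nn_integral_suminf) (rule W'm)
        also have "\<dots> \<le> (\<Sum>n. ennreal (16 * T powr (2 * H)) * ennreal ((coeff R0 g n)\<^sup>2))"
        proof (rule suminf_le)
          fix n
          have c: "continuous_on {0..t} (\<lambda>s. B s \<omega>)" if w: "\<omega> \<in> space M" for \<omega>
            by (rule continuous_on_subset[OF fBm_cont[OF fBm w]]) auto
          have Wb: "(\<integral>\<^sup>+\<omega>. ennreal ((W n t \<omega>)\<^sup>2) \<partial>M) \<le> ennreal (4 * t powr (2 * H))"
            unfolding W_def
          proof (rule W_bound[OF fBm t0 H])
            show "kern R0 a n t x \<le> kern R0 a n t y" if "0 \<le> x" "x \<le> y" "y \<le> t" for x y
              using that by (rule kern_props(3)[OF a a0 am tT])
            show "0 \<le> kern R0 a n t x \<and> kern R0 a n t x \<le> 1" if "0 \<le> x" "x \<le> t" for x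
              using kern_props(1,2)[OF a a0 am tT, of x R0 n] that by (simp add: less_imp_le)
            show "convergent (\<lambda>N. RS B (kern R0 a n t) t N \<omega>)" if w: "\<omega> \<in> space M" for \<omega>
              by (rule RS_convergent[where B=B and \<omega>=\<omega>, OF t0 c[OF w]]) (rule kern_props(3)[OF a a0 am tT])
          qed
          have "(\<integral>\<^sup>+\<omega>. ennreal (4 * (coeff R0 g n)\<^sup>2 * (W' n (t, \<omega>))\<^sup>2) \<partial>M)
              = (\<integral>\<^sup>+\<omega>. ennreal (4 * (coeff R0 g n)\<^sup>2) * ennreal ((W n t \<omega>)\<^sup>2) \<partial>M)"
            using True by (intro nn_integral_cong) (simp add: W'_def ennreal_mult)
          also have "\<dots> = ennreal (4 * (coeff R0 g n)\<^sup>2) * (\<integral>\<^sup>+\<omega>. ennreal ((W n t \<omega>)\<^sup>2) \<partial>M)"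
            using Wt[of n] by (intro nn_integral_cmult) measurable
          also have "\<dots> \<le> ennreal (4 * (coeff R0 g n)\<^sup>2) * ennreal (4 * t powr (2 * H))"
            by (rule mult_left_mono[OF Wb]) simp
          also have "\<dots> = ennreal (4 * (coeff R0 g n)\<^sup>2 * (4 * t powr (2 * H)))"
            by (rule ennreal_mult[symmetric]) auto
          also have "\<dots> \<le> ennreal (16 * T powr (2 * H) * (coeff R0 g n)\<^sup>2)"
          proof (rule ennreal_leI)
            have tp: "t powr (2 * H) \<le> T powr (2 * H)" using t0 tT H by (intro powr_mono2) auto
            show "4 * (coeff R0 g n)\<^sup>2 * (4 * t powr (2 * H)) \<le> 16 * T powr (2 * H) * (coeff R0 g n)\<^sup>2"
              using mult_left_mono[OF tp, of "(coeff R0 g n)\<^sup>2"] by (simp add: mult_ac)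
          qed
          also have "\<dots> = ennreal (16 * T powr (2 * H)) * ennreal ((coeff R0 g n)\<^sup>2)"
            by (simp add: ennreal_mult)
          finally show "(\<integral>\<^sup>+\<omega>. ennreal (4 * (coeff R0 g n)\<^sup>2 * (W' n (t, \<omega>))\<^sup>2) \<partial>M) \<le> ennreal (16 * T powr (2 * H)) * ennreal ((coeff R0 g n)\<^sup>2)" .
        qed auto
        also have "\<dots> = ennreal (16 * T powr (2 * H)) * (\<Sum>n. ennreal ((coeff R0 g n)\<^sup>2))" by simp
        also have "\<dots> \<le> ennreal (16 * T powr (2 * H)) * ennreal ng" by (rule mult_left_mono[OF gn_bnd]) simp
        also have "\<dots> = R" unfolding R_def using ng0 by (simp add: ennreal_mult)
        finally show ?thesis .
      qed
      have "(\<integral>\<^sup>+\<omega>. (PP + Q (t, \<omega>)) * indicator {0..T} t \<partial>M) = (\<integral>\<^sup>+\<omega>. PP + Q (t, \<omega>) \<partial>M)"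
        using True by simp
      also have "\<dots> = (\<integral>\<^sup>+\<omega>. PP \<partial>M) + (\<integral>\<^sup>+\<omega>. Q (t, \<omega>) \<partial>M)"
        by (rule nn_integral_add) (use Qt in auto)
      also have "(\<integral>\<^sup>+\<omega>. PP \<partial>M) = PP" by (simp add: emeasure_space_1)
      finally show ?thesis using Qb True by (simp add: add_left_mono)
    qed
    have "(\<integral>\<^sup>+\<omega>. (\<integral>\<^sup>+ t\<in>{0..T}. (\<integral>\<^sup>+ r\<in>{0..R0}. ennreal (r\<^sup>2 * (u r t \<omega>)\<^sup>2) \<partial>lborel) \<partial>lborel) \<partial>M)
        \<le> (\<integral>\<^sup>+\<omega>. (\<integral>\<^sup>+t. (PP + Q (t, \<omega>)) * indicator {0..T} t \<partial>lborel) \<partial>M)"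
    proof (intro nn_integral_mono)
      fix \<omega> t assume w: "\<omega> \<in> space M"
      show "(\<integral>\<^sup>+ r\<in>{0..R0}. ennreal (r\<^sup>2 * (u r t \<omega>)\<^sup>2) \<partial>lborel) * indicator {0..T} t \<le> (PP + Q (t, \<omega>)) * indicator {0..T} t"
        using pw[OF _ w, of t] by (cases "t \<in> {0..T}") auto
    qed
    also have "\<dots> = (\<integral>\<^sup>+t. (\<integral>\<^sup>+\<omega>. (PP + Q (t, \<omega>)) * indicator {0..T} t \<partial>M) \<partial>lborel)"
    proof (rule pls.Fubini')
      have "(\<lambda>x. (PP + Q x) * indicator {0..T} (fst x)) \<in> borel_measurable (lborel \<Otimes>\<^sub>M M)" by measurable
      then show "(\<lambda>(t, \<omega>). (PP + Q (t, \<omega>)) * indicator {0..T} t) \<in> borel_measurable (lborel \<Otimes>\<^sub>M M)"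
        by (simp add: case_prod_beta')
    qed
    also have "\<dots> \<le> (\<integral>\<^sup>+t. (PP + R) * indicator {0..T} t \<partial>lborel)"
      by (rule nn_integral_mono) (rule inner)
    also have "\<dots> = (PP + R) * ennreal T"
      using T by (simp add: nn_integral_cmult_indicator)
    also have "\<dots> = ennreal ((4 * (T * Eb)\<^sup>2 * nf + 16 * T powr (2 * H) * ng) * T)"
      unfolding PP_def R_def using nf0 ng0 T by (simp add: ennreal_plus[symmetric] ennreal_mult)
    also have "\<dots> \<le> ennreal (48 * (T ^ 3 * wnorm2 R0 f *
              (real_of_ereal (esssup (restrict_space lborel {0<..<T}) (\<lambda>t. ereal \<bar>h t\<bar>)))\<^sup>2
            + T powr (2 * H + 1) / (2 * H + 1) * wnorm2 R0 g))"
    proof (rule ennreal_leI)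
      define e where "e = real_of_ereal (esssup (restrict_space lborel {0<..<T}) (\<lambda>t. ereal \<bar>h t\<bar>))"
      have Ebe: "Eb\<^sup>2 = e\<^sup>2" unfolding Eb_def e_def by (rule power2_abs)
      have p: "T powr (2 * H + 1) = T powr (2 * H) * T" using T by (simp add: powr_add)
      have h3: "2 * H + 1 \<le> 3" using H1 by simp
      have pos: "0 \<le> T powr (2 * H) * T * ng" using T ng0 by simp
      have X0: "0 \<le> T ^ 3 * nf * e\<^sup>2" using T nf0 by simp
      have "(T * Eb)\<^sup>2 = T\<^sup>2 * e\<^sup>2" by (simp only: power_mult_distrib Ebe)
      then have eqA: "4 * (T * Eb)\<^sup>2 * nf * T = 4 * (T ^ 3 * nf * e\<^sup>2)"
        by (auto simp: power3_eq_cube power2_eq_square mult_ac)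
      have A: "4 * (T * Eb)\<^sup>2 * nf * T \<le> 48 * (T ^ 3 * nf * e\<^sup>2)" using eqA X0 by linarith
      have "16 * T powr (2 * H) * ng * T * (2 * H + 1) \<le> 16 * T powr (2 * H) * ng * T * 3"
        using pos h3 by (intro mult_left_mono) (auto simp: mult_ac)
      then have Bq: "16 * T powr (2 * H) * ng * T \<le> 48 * (T powr (2 * H + 1) / (2 * H + 1) * ng)"
        using H0 unfolding p by (simp add: field_simps)
      show "(4 * (T * Eb)\<^sup>2 * nf + 16 * T powr (2 * H) * ng) * T \<le> 48 * (T ^ 3 * wnorm2 R0 f * (real_of_ereal (esssup (restrict_space lborel {0<..<T}) (\<lambda>t. ereal \<bar>h t\<bar>)))\<^sup>2 + T powr (2 * H + 1) / (2 * H + 1) * wnorm2 R0 g)"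
        using A Bq unfolding e_def[symmetric] nf_def[symmetric] ng_def[symmetric] by (simp add: algebra_simps)
    qed
    finally show "(\<integral>\<^sup>+ \<omega>. (\<integral>\<^sup>+ t\<in>{0..T}. (\<integral>\<^sup>+ r\<in>{0..R0}. ennreal (r\<^sup>2 * (u r t \<omega>)\<^sup>2) \<partial>lborel) \<partial>lborel) \<partial>M)
       \<le> ennreal (48 * (T ^ 3 * wnorm2 R0 f *
              (real_of_ereal (esssup (restrict_space lborel {0<..<T}) (\<lambda>t. ereal \<bar>h t\<bar>)))\<^sup>2
            + T powr (2 * H + 1) / (2 * H + 1) * wnorm2 R0 g))" .
  qed
qed

end
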